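(* Let $A_0(t)$ be an operator-valued function (on a finite-dimensional space) analytic in $t$ over the reals, $\alpha$ real, and define $\alpha A_j(t)$ recursively by $$\alpha A_{j+1}(t)=\sum_{m=1}^\infty(-1)^m\frac{m}{(m+1)!}\,\mathrm{ad}^m_{\int_0^t\alpha A_j(s)ds}\big[\alpha A_j(t)\big].$$ Let $U(t)=\mathcal{T}e^{\int_0^t\alpha A_0(s)ds}$ and $U_F(t)=\prod_{j=0}^{k-1}e^{\int_0^t\alpha A_j(s)ds}$ (factor $j=0$ leftmost). Then $$\|U_F(t)-U(t)\|=O\big(\alpha^{2^k}t^{2^{k+1}-1}\big).$$
   Context: $\mathcal{T}e^{\int_0^tX(s)ds}$ denotes the time-ordered exponential, i.e. the solution $W(t)$ of $W'(t)=X(t)W(t)$, $W(0)=I$. $\mathrm{ad}_X(Y)=[X,Y]$, $\mathrm{ad}_X^m=\mathrm{ad}_X\circ\mathrm{ad}_X^{m-1}$. The factor $-i$ is absorbed into $A_0$ (e.g. $A_0$ anti-Hermitian), so that $U$ and $U_F$ are bounded. $\|\cdot\|$ is the operator norm; asymptotics refer to small $\alpha,t$. *)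

theory Defs
  imports "HOL-Analysis.Analysis"
begin

primrec mpow :: "complex^'n^'n \<Rightarrow> nat \<Rightarrow> complex^'n^'n" where
  "mpow M 0 = mat 1"
| "mpow M (Suc n) = M ** mpow M n"

definition mexp :: "complex^'n^'n \<Rightarrow> complex^'n^'n" where
  "mexp M = (\<Sum>k. (1 / fact k) *\<^sub>R mpow M k)"

definition opnorm :: "complex^'n^'n \<Rightarrow> real" where
  "opnorm M = onorm (\<lambda>x. M *v x)"

definition ad :: "complex^'n^'n \<Rightarrow> complex^'n^'n \<Rightarrow> complex^'n^'n" where
  "ad X Y = X ** Y - Y ** X"

definition oint :: "(real \<Rightarrow> 'b::real_normed_vector) \<Rightarrow> real \<Rightarrow> 'b" where
  "oint f t = (if 0 \<le> t then integral {0..t} f else - integral {t..0} f)"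

definition real_analytic :: "(real \<Rightarrow> 'b::real_normed_vector) \<Rightarrow> bool" where
  "real_analytic f \<longleftrightarrow>
     (\<forall>t0. \<exists>r>0. \<exists>c::nat \<Rightarrow> 'b. \<forall>t. \<bar>t - t0\<bar> < r \<longrightarrow> (\<lambda>n. (t - t0) ^ n *\<^sub>R c n) sums f t)"

text \<open>magA alpha A0 j t is the operator written alpha A_j(t) in the paper.\<close>
fun magA :: "real \<Rightarrow> (real \<Rightarrow> complex^'n^'n) \<Rightarrow> nat \<Rightarrow> real \<Rightarrow> complex^'n^'n" where
  "magA \<alpha> A0 0 t = \<alpha> *\<^sub>R A0 t"
| "magA \<alpha> A0 (Suc j) t =
     (\<Sum>m. ((-1) ^ Suc m * real (Suc m) / fact (Suc m + 1)) *\<^sub>R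
            ((ad (oint (magA \<alpha> A0 j) t) ^^ Suc m) (magA \<alpha> A0 j t)))"

definition UF :: "real \<Rightarrow> (real \<Rightarrow> complex^'n^'n) \<Rightarrow> nat \<Rightarrow> real \<Rightarrow> complex^'n^'n" where
  "UF \<alpha> A0 k t = foldr (\<lambda>j P. mexp (oint (magA \<alpha> A0 j) t) ** P) [0..<k] (mat 1)"

end

theory Submission
  imports Defs
begin

definition adb :: "'a::ring \<Rightarrow> 'a \<Rightarrow> 'a" where "adb X Y = X * Y - Y * X"

lemma adb_funpow_Suc: "(adb X ^^ Suc k) H = adb X ((adb X ^^ k) H)"
  by simp

lemma norm_adb: "norm (adb X Y) \<le> 2 * norm X * norm (Y::'a::real_normed_algebra)"
proof -
  have "norm (adb X Y) \<le> norm (X * Y) + norm (Y * X)" unfolding adb_def by (rule norm_triangle_ineq4)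
  also have "\<dots> \<le> norm X * norm Y + norm Y * norm X" by (intro add_mono norm_mult_ineq)
  finally show ?thesis by simp
qed

lemma norm_adb_pow: "norm ((adb X ^^ k) Y) \<le> (2 * norm X) ^ k * norm (Y::'a::real_normed_algebra)"
proof (induction k)
  case 0 then show ?case by simp
next
  case (Suc k)
  have "norm ((adb X ^^ Suc k) Y) \<le> 2 * norm X * norm ((adb X ^^ k) Y)"
    using norm_adb by simp
  also have "\<dots> \<le> 2 * norm X * ((2 * norm X) ^ k * norm Y)"
    by (intro mult_left_mono Suc) auto
  finally show ?case by (simp add: algebra_simps)
qed

lemma pascal_sum:
  fixes g :: "nat \<Rightarrow> nat \<Rightarrow> 'a::real_vector"
  shows "(\<Sum>k\<le>Suc n. real (Suc n choose k) *\<^sub>R g k (Suc n - k)) =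
    (\<Sum>k\<le>n. real (n choose k) *\<^sub>R g (Suc k) (n - k)) + (\<Sum>k\<le>n. real (n choose k) *\<^sub>R g k (Suc n - k))"
proof -
  have A: "(\<Sum>k\<le>Suc n. real (Suc n choose k) *\<^sub>R g k (Suc n - k)) =
     g 0 (Suc n) + (\<Sum>k\<le>n. real (Suc n choose Suc k) *\<^sub>R g (Suc k) (n - k))"
    by (simp only: sum.atMost_Suc_shift) simp
  have B: "(\<Sum>k\<le>n. real (Suc n choose Suc k) *\<^sub>R g (Suc k) (n - k)) =
     (\<Sum>k\<le>n. real (n choose k) *\<^sub>R g (Suc k) (n - k)) + (\<Sum>k\<le>n. real (n choose Suc k) *\<^sub>R g (Suc k) (n - k))"
    by (simp add: binomial_Suc_Suc scaleR_add_left sum.distrib)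
  have C: "(\<Sum>k\<le>n. real (n choose Suc k) *\<^sub>R g (Suc k) (n - k)) = (\<Sum>k<n. real (n choose Suc k) *\<^sub>R g (Suc k) (n - k))"
    by (simp add: lessThan_Suc_atMost[symmetric])
  have D: "(\<Sum>k\<le>n. real (n choose k) *\<^sub>R g k (Suc n - k)) = g 0 (Suc n) + (\<Sum>k<n. real (n choose Suc k) *\<^sub>R g (Suc k) (n - k))"
    by (simp add: lessThan_Suc_atMost[symmetric] sum.lessThan_Suc_shift del: sum.lessThan_Suc)
  show ?thesis using A B C D by (simp add: algebra_simps)
qed

lemma pow_mult_comm_expand:
  fixes Y H :: "'a::real_algebra_1"
  shows "Y ^ n * H = (\<Sum>k\<le>n. real (n choose k) *\<^sub>R ((adb Y ^^ k) H * Y ^ (n - k)))"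
proof (induction n arbitrary: H)
  case 0 then show ?case by simp
next
  case (Suc n)
  have "Y ^ Suc n * H = Y ^ n * (Y * H)" by (simp only: power_Suc2 mult.assoc)
  also have "Y * H = adb Y H + H * Y" by (simp add: adb_def)
  also have "Y ^ n * (adb Y H + H * Y) = Y ^ n * adb Y H + (Y ^ n * H) * Y"
    by (simp add: distrib_left mult.assoc)
  also have "\<dots> = (\<Sum>k\<le>n. real (n choose k) *\<^sub>R ((adb Y ^^ Suc k) H * Y ^ (n - k)))
      + (\<Sum>k\<le>n. real (n choose k) *\<^sub>R ((adb Y ^^ k) H * Y ^ (Suc n - k)))"
  proof -
    have "(Y ^ n * H) * Y = (\<Sum>k\<le>n. real (n choose k) *\<^sub>R ((adb Y ^^ k) H * Y ^ (n - k) * Y))"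
      unfolding Suc.IH[of H] by (simp add: sum_distrib_right)
    also have "\<dots> = (\<Sum>k\<le>n. real (n choose k) *\<^sub>R ((adb Y ^^ k) H * Y ^ (Suc n - k)))"
      by (intro sum.cong refl) (simp add: Suc_diff_le power_commutes mult.assoc)
    finally show ?thesis unfolding Suc.IH[of "adb Y H"] by (simp add: funpow_swap1)
  qed
  also have "\<dots> = (\<Sum>k\<le>Suc n. real (Suc n choose k) *\<^sub>R ((adb Y ^^ k) H * Y ^ (Suc n - k)))"
    using pascal_sum[of n "\<lambda>k j. (adb Y ^^ k) H * Y ^ j"] by simp
  finally show ?case .
qed


lemma exp_sums_generic: "(\<lambda>n. Y ^ n /\<^sub>R fact n) sums exp (Y::'a::{real_normed_algebra_1,banach})"
  unfolding exp_def by (rule summable_sums[OF summable_exp_generic])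

lemma summable_norm_adb_series:
  fixes Y H :: "'a::{real_normed_algebra_1,banach}"
  assumes "\<And>k. \<bar>c k\<bar> \<le> 1 / fact k"
  shows "summable (\<lambda>k. norm (c k *\<^sub>R (adb Y ^^ k) H))"
proof (rule summable_comparison_test')
  show "summable (\<lambda>k. norm H * ((2 * norm Y) ^ k /\<^sub>R fact k))"
    by (intro summable_mult summable_exp_generic)
  fix k :: nat
  have "norm (c k *\<^sub>R (adb Y ^^ k) H) = \<bar>c k\<bar> * norm ((adb Y ^^ k) H)" by simp
  also have "\<dots> \<le> (1 / fact k) * ((2 * norm Y) ^ k * norm H)"
    by (intro mult_mono assms norm_adb_pow) auto
  finally show "norm (norm (c k *\<^sub>R (adb Y ^^ k) H)) \<le> norm H * ((2 * norm Y) ^ k /\<^sub>R fact k)"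
    by (simp add: field_simps)
qed

lemma exp_mult_comm:
  fixes Y H :: "'a::{real_normed_algebra_1,banach}"
  shows "exp Y * H = (\<Sum>k. (1 / fact k) *\<^sub>R (adb Y ^^ k) H) * exp Y"
proof -
  define a where "a k = (1 / fact k) *\<^sub>R (adb Y ^^ k) H" for k
  define b where "b k = Y ^ k /\<^sub>R fact k" for k
  have sa: "summable (\<lambda>k. norm (a k))" unfolding a_def
    by (rule summable_norm_adb_series) simp
  have sb: "summable (\<lambda>k. norm (b k))" unfolding b_def
  proof (rule summable_comparison_test')
    show "summable (\<lambda>k. norm Y ^ k /\<^sub>R fact k)" by (rule summable_exp_generic)
    fix k :: nat
    show "norm (norm (Y ^ k /\<^sub>R fact k)) \<le> norm Y ^ k /\<^sub>R fact k"
      using norm_power_ineq[of Y k] by (simp add: divide_right_mono)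
  qed
  have C: "(\<lambda>n. \<Sum>i\<le>n. a i * b (n - i)) sums (suminf a * suminf b)"
    by (rule Cauchy_product_sums[OF sa sb])
  have "suminf b = exp Y" unfolding b_def exp_def ..
  have T: "(\<Sum>i\<le>n. a i * b (n - i)) = (Y ^ n /\<^sub>R fact n) * H" for n
  proof -
    have "(Y ^ n /\<^sub>R fact n) * H = (1 / fact n) *\<^sub>R (Y ^ n * H)" by (simp add: divide_inverse)
    also have "\<dots> = (\<Sum>k\<le>n. (1 / fact n * real (n choose k)) *\<^sub>R ((adb Y ^^ k) H * Y ^ (n - k)))"
      unfolding pow_mult_comm_expand by (simp add: scaleR_sum_right)
    also have "\<dots> = (\<Sum>i\<le>n. a i * b (n - i))"
    proof (intro sum.cong refl)
      fix k assume "k \<in> {..n}"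
      then have kn: "k \<le> n" by simp
      have "1 / fact n * real (n choose k) = 1 / fact k * (1 / fact (n - k))"
        using binomial_fact[OF kn, where 'a=real] by (simp add: field_simps)
      then show "(1 / fact n * real (n choose k)) *\<^sub>R ((adb Y ^^ k) H * Y ^ (n - k)) = a k * b (n - k)"
        unfolding a_def b_def by (simp add: divide_inverse)
    qed
    finally show ?thesis by simp
  qed
  have S1: "(\<lambda>n. (Y ^ n /\<^sub>R fact n) * H) sums (suminf a * exp Y)"
    using C T \<open>suminf b = exp Y\<close> by simp
  have S2: "(\<lambda>n. (Y ^ n /\<^sub>R fact n) * H) sums (exp Y * H)"
    by (rule sums_mult2[OF exp_sums_generic])
  show ?thesis using sums_unique2[OF S2 S1] unfolding a_def by simp
qed


definition Ep :: "nat \<Rightarrow> 'a::real_algebra_1 \<Rightarrow> 'a \<Rightarrow> 'a" where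
  "Ep n X H = (\<Sum>k<n. real (n choose Suc k) *\<^sub>R ((adb X ^^ k) H * X ^ (n - Suc k)))"

lemma Ep_Suc: "Ep (Suc n) X H = X ^ n * H + Ep n X H * X"
proof -
  have "Ep (Suc n) X H = (\<Sum>k<Suc n. (real (n choose k) + real (n choose Suc k)) *\<^sub>R ((adb X ^^ k) H * X ^ (n - k)))"
    unfolding Ep_def by (simp add: binomial_Suc_Suc)
  also have "\<dots> = (\<Sum>k\<le>n. real (n choose k) *\<^sub>R ((adb X ^^ k) H * X ^ (n - k)))
       + (\<Sum>k<Suc n. real (n choose Suc k) *\<^sub>R ((adb X ^^ k) H * X ^ (n - k)))"
    by (simp add: scaleR_add_left sum.distrib lessThan_Suc_atMost)
  also have "(\<Sum>k\<le>n. real (n choose k) *\<^sub>R ((adb X ^^ k) H * X ^ (n - k))) = X ^ n * H"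
    by (simp add: pow_mult_comm_expand)
  also have "(\<Sum>k<Suc n. real (n choose Suc k) *\<^sub>R ((adb X ^^ k) H * X ^ (n - k)))
      = (\<Sum>k<n. real (n choose Suc k) *\<^sub>R ((adb X ^^ k) H * X ^ (n - Suc k) * X))"
  proof -
    have "(\<Sum>k<Suc n. real (n choose Suc k) *\<^sub>R ((adb X ^^ k) H * X ^ (n - k)))
       = (\<Sum>k<n. real (n choose Suc k) *\<^sub>R ((adb X ^^ k) H * X ^ (n - k)))" by simp
    also have "\<dots> = (\<Sum>k<n. real (n choose Suc k) *\<^sub>R ((adb X ^^ k) H * X ^ (n - Suc k) * X))"
    proof (intro sum.cong refl)
      fix k assume "k \<in> {..<n}"
      then have "X ^ (n - k) = X ^ (n - Suc k) * X" by (metis Suc_diff_Suc lessThan_iff power_Suc2)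
      then show "real (n choose Suc k) *\<^sub>R ((adb X ^^ k) H * X ^ (n - k)) = real (n choose Suc k) *\<^sub>R ((adb X ^^ k) H * X ^ (n - Suc k) * X)"
        by (simp add: mult.assoc)
    qed
    finally show ?thesis .
  qed
  also have "\<dots> = Ep n X H * X" unfolding Ep_def by (simp add: sum_distrib_right)
  finally show ?thesis .
qed

lemma power_has_derivative_gen:
  fixes X :: "'a::real_normed_algebra_1"
  shows "((\<lambda>X. X ^ n) has_derivative Ep n X) (at X within S)"
proof (induction n)
  case 0
  have "Ep 0 X = (\<lambda>H. 0)" by (simp add: Ep_def fun_eq_iff)
  then show ?case by (simp add: has_derivative_const)
next
  case (Suc n)
  have "((\<lambda>X. X ^ n * X) has_derivative (\<lambda>h. X ^ n * h + Ep n X h * X)) (at X within S)"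
    by (rule has_derivative_mult[OF Suc has_derivative_ident])
  moreover have "(\<lambda>h. X ^ n * h + Ep n X h * X) = Ep (Suc n) X" by (simp add: fun_eq_iff Ep_Suc)
  ultimately show ?case by (simp add: power_Suc2 del: power_Suc)
qed

lemma norm_Ep_le:
  fixes X :: "'a::real_normed_algebra_1"
  assumes "norm X \<le> R"
  shows "norm (Ep n X H) \<le> (4 * (2 * R + 1)) ^ n * norm H"
proof -
  have R0: "0 \<le> R" using assms norm_ge_zero order_trans by blast
  have t: "norm (real (n choose Suc k) *\<^sub>R ((adb X ^^ k) H * X ^ (n - Suc k))) \<le> 2 ^ n * ((2 * R + 1) ^ n * norm H)"
    if "k < n" for k
  proof -
    have "norm ((adb X ^^ k) H * X ^ (n - Suc k)) \<le> norm ((adb X ^^ k) H) * norm (X ^ (n - Suc k))"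
      by (rule norm_mult_ineq)
    also have "\<dots> \<le> ((2 * R + 1) ^ k * norm H) * (2 * R + 1) ^ (n - Suc k)"
    proof (intro mult_mono)
      have "norm ((adb X ^^ k) H) \<le> (2 * norm X) ^ k * norm H" by (rule norm_adb_pow)
      also have "\<dots> \<le> (2 * R + 1) ^ k * norm H"
        by (intro mult_right_mono power_mono) (use assms in auto)
      finally show "norm ((adb X ^^ k) H) \<le> (2 * R + 1) ^ k * norm H" .
      have "norm (X ^ (n - Suc k)) \<le> norm X ^ (n - Suc k)" by (rule norm_power_ineq)
      also have "\<dots> \<le> (2 * R + 1) ^ (n - Suc k)" by (intro power_mono) (use assms R0 in auto)
      finally show "norm (X ^ (n - Suc k)) \<le> (2 * R + 1) ^ (n - Suc k)" .
    qed (use R0 in auto)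
    also have "\<dots> = (2 * R + 1) ^ (k + (n - Suc k)) * norm H" by (simp add: power_add)
    also have "\<dots> \<le> (2 * R + 1) ^ n * norm H"
      by (intro mult_right_mono power_increasing) (use R0 that in auto)
    finally have A: "norm ((adb X ^^ k) H * X ^ (n - Suc k)) \<le> (2 * R + 1) ^ n * norm H" .
    have B: "real (n choose Suc k) \<le> 2 ^ n"
      using binomial_le_pow2[of n "Suc k"] by (metis of_nat_le_iff of_nat_numeral of_nat_power)
    show ?thesis
      using mult_mono[OF B A] by simp
  qed
  have "norm (Ep n X H) \<le> (\<Sum>k<n. norm (real (n choose Suc k) *\<^sub>R ((adb X ^^ k) H * X ^ (n - Suc k))))"
    unfolding Ep_def by (rule norm_sum)
  also have "\<dots> \<le> (\<Sum>k<n. 2 ^ n * ((2 * R + 1) ^ n * norm H))"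
    by (intro sum_mono t) simp
  also have "\<dots> = real n * 2 ^ n * ((2 * R + 1) ^ n * norm H)" by simp
  also have "\<dots> \<le> 2 ^ n * 2 ^ n * ((2 * R + 1) ^ n * norm H)"
  proof (intro mult_right_mono)
    have "n < 2 ^ n" by (rule less_exp)
    then show "real n \<le> 2 ^ n" by (metis less_imp_le of_nat_le_iff of_nat_numeral of_nat_power)
  qed (use R0 in auto)
  also have "\<dots> = (4 * (2 * R + 1)) ^ n * norm H"
    by (simp add: power_mult_distrib power_mult[symmetric] mult.assoc[symmetric])
      (simp add: power_mult_distrib[symmetric])
  finally show ?thesis .
qed


definition dexpb :: "'a::{real_normed_algebra_1,banach} \<Rightarrow> 'a \<Rightarrow> 'a" where
  "dexpb X H = (\<Sum>k. (1 / fact (Suc k)) *\<^sub>R (adb X ^^ k) H) * exp X"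

lemma Ep_sums:
  fixes Z H :: "'a::{real_normed_algebra_1,banach}"
  shows "(\<lambda>n. Ep n Z H /\<^sub>R fact n) sums dexpb Z H"
proof -
  define a where "a k = (1 / fact (Suc k)) *\<^sub>R (adb Z ^^ k) H" for k
  define b where "b k = Z ^ k /\<^sub>R fact k" for k
  have sa: "summable (\<lambda>k. norm (a k))" unfolding a_def
  proof (rule summable_norm_adb_series)
    fix k :: nat
    have "fact k \<le> (fact (Suc k) :: real)" by (rule fact_mono) simp
    then show "\<bar>1 / fact (Suc k)\<bar> \<le> 1 / (fact k :: real)"
      by (simp add: frac_le)
  qed
  have sb: "summable (\<lambda>k. norm (b k))" unfolding b_def
  proof (rule summable_comparison_test')
    show "summable (\<lambda>k. norm Z ^ k /\<^sub>R fact k)" by (rule summable_exp_generic)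
    fix k :: nat
    show "norm (norm (Z ^ k /\<^sub>R fact k)) \<le> norm Z ^ k /\<^sub>R fact k"
      using norm_power_ineq[of Z k] by (simp add: divide_right_mono)
  qed
  have C: "(\<lambda>n. \<Sum>i\<le>n. a i * b (n - i)) sums (suminf a * suminf b)"
    by (rule Cauchy_product_sums[OF sa sb])
  have "suminf b = exp Z" unfolding b_def exp_def ..
  have T: "Ep (Suc m) Z H /\<^sub>R fact (Suc m) = (\<Sum>i\<le>m. a i * b (m - i))" for m
  proof -
    have "Ep (Suc m) Z H /\<^sub>R fact (Suc m) =
       (\<Sum>k<Suc m. (1 / fact (Suc m) * real (Suc m choose Suc k)) *\<^sub>R ((adb Z ^^ k) H * Z ^ (m - k)))"
      unfolding Ep_def scaleR_sum_right scaleR_scaleR diff_Suc_Suc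
      by (intro sum.cong refl) (simp add: divide_inverse)
    also have "\<dots> = (\<Sum>i\<le>m. a i * b (m - i))"
      unfolding lessThan_Suc_atMost
    proof (intro sum.cong refl)
      fix k assume "k \<in> {..m}"
      then have km: "Suc k \<le> Suc m" by simp
      have e: "real (Suc m choose Suc k) = fact (Suc m) / (fact (Suc k) * fact (m - k))"
        using binomial_fact[OF km, where 'a=real] unfolding diff_Suc_Suc .
      have "1 / fact (Suc m) * real (Suc m choose Suc k) = 1 / fact (Suc k) * (1 / fact (m - k))"
        unfolding e by (simp del: fact_Suc)
      then show "(1 / fact (Suc m) * real (Suc m choose Suc k)) *\<^sub>R ((adb Z ^^ k) H * Z ^ (m - k)) = a k * b (m - k)"
        unfolding a_def b_def by (simp add: divide_inverse)
    qed
    finally show ?thesis .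
  qed
  have "(\<lambda>m. Ep (Suc m) Z H /\<^sub>R fact (Suc m)) sums dexpb Z H"
    using C T \<open>suminf b = exp Z\<close> unfolding dexpb_def a_def by simp
  moreover have "Ep 0 Z H = 0" by (simp add: Ep_def)
  ultimately show ?thesis by (subst (asm) sums_Suc_iff) simp
qed

lemma exp_has_derivative_gen:
  fixes X :: "'a::{real_normed_algebra_1,banach}"
  shows "(exp has_derivative dexpb X) (at X)"
proof -
  define R where "R = norm X + 1"
  define S where "S = ball (0::'a) R"
  define c where "c n = (4 * (2 * R + 1)) ^ n /\<^sub>R fact n" for n
  have R0: "0 \<le> R" unfolding R_def by simp
  have XS: "X \<in> S" unfolding S_def R_def by simp
  have cs: "summable c" unfolding c_def by (rule summable_exp_generic)
  have c0: "0 \<le> c n" for n unfolding c_def using R0 by simp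
  have bound: "norm (Ep n Z H /\<^sub>R fact n) \<le> c n * norm H" if "Z \<in> S" for n Z H
  proof -
    have "norm Z \<le> R" using that unfolding S_def by simp
    then have "norm (Ep n Z H) \<le> (4 * (2 * R + 1)) ^ n * norm H" by (rule norm_Ep_le)
    then show ?thesis unfolding c_def by (simp add: divide_right_mono)
  qed
  have "\<exists>g. \<forall>x\<in>S. (\<lambda>n. x ^ n /\<^sub>R fact n) sums (g x) \<and> (g has_derivative dexpb x) (at x within S)"
  proof (rule has_derivative_series[where f' = "\<lambda>n x H. Ep n x H /\<^sub>R fact n"])
    show "convex S" unfolding S_def by simp
    show "X \<in> S" by (rule XS)
    show "(\<lambda>n. X ^ n /\<^sub>R fact n) sums exp X" by (rule exp_sums_generic)
    fix n :: nat and x :: 'a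
    show "((\<lambda>x. x ^ n /\<^sub>R fact n) has_derivative (\<lambda>H. Ep n x H /\<^sub>R fact n)) (at x within S)"
      by (intro has_derivative_scaleR_right power_has_derivative_gen)
  next
    fix e :: real assume e: "0 < e"
    obtain N where N: "\<And>n. n \<ge> N \<Longrightarrow> norm (\<Sum>i. c (i + n)) < e"
      using suminf_exist_split[OF e cs] by blast
    show "\<forall>\<^sub>F n in sequentially. \<forall>x\<in>S. \<forall>h. norm ((\<Sum>i<n. Ep i x h /\<^sub>R fact i) - dexpb x h) \<le> e * norm h"
    proof (rule eventually_sequentiallyI[of N], intro ballI allI)
      fix n x h assume n: "N \<le> n" and x: "x \<in> S"
      have "(\<lambda>i. Ep (i + n) x h /\<^sub>R fact (i + n)) sums (dexpb x h - (\<Sum>i<n. Ep i x h /\<^sub>R fact i))"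
        using sums_split_initial_segment[OF Ep_sums, of n x h] by simp
      then have eq: "(\<Sum>i<n. Ep i x h /\<^sub>R fact i) - dexpb x h = - (\<Sum>i. Ep (i + n) x h /\<^sub>R fact (i + n))"
        by (simp add: sums_iff)
      have cs': "summable (\<lambda>i. c (i + n) * norm h)"
        by (intro summable_mult2 summable_ignore_initial_segment cs)
      have "norm (\<Sum>i. Ep (i + n) x h /\<^sub>R fact (i + n)) \<le> (\<Sum>i. c (i + n) * norm h)"
        by (rule norm_suminf_le[OF bound[OF x] cs'])
      also have "\<dots> = (\<Sum>i. c (i + n)) * norm h"
        by (rule suminf_mult2[symmetric]) (intro summable_ignore_initial_segment cs)
      also have "\<dots> \<le> e * norm h"
      proof (rule mult_right_mono)
        have "(\<Sum>i. c (i + n)) \<le> norm (\<Sum>i. c (i + n))" by simp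
        then show "(\<Sum>i. c (i + n)) \<le> e" using N[OF n] by linarith
      qed simp
      finally show "norm ((\<Sum>i<n. Ep i x h /\<^sub>R fact i) - dexpb x h) \<le> e * norm h"
        unfolding eq by simp
    qed
  qed
  then obtain g where g: "\<And>x. x \<in> S \<Longrightarrow> (\<lambda>n. x ^ n /\<^sub>R fact n) sums (g x)"
    "\<And>x. x \<in> S \<Longrightarrow> (g has_derivative dexpb x) (at x within S)" by blast
  have geq: "g x = exp x" if "x \<in> S" for x
    using sums_unique2[OF g(1)[OF that] exp_sums_generic] .
  have "(g has_derivative dexpb X) (at X)"
    using g(2)[OF XS] at_within_open[OF XS] unfolding S_def by simp
  then show ?thesis
    by (rule has_derivative_transform_within_open[where s=S]) (use XS geq in \<open>auto simp: S_def\<close>)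
qed


definition cm :: "nat \<Rightarrow> real" where
  "cm m = ((-1) ^ Suc m * real (Suc m) / fact (Suc m + 1))"

lemma adb_uminus_left: "adb (- X) Y = - adb X (Y::'a::ring)"
  by (simp add: adb_def)

lemma adb_uminus_right: "adb X (- Y) = - adb X (Y::'a::ring)"
  by (simp add: adb_def algebra_simps)

lemma adb_pow_uminus_right: "(adb X ^^ k) (- Y) = - (adb X ^^ k) (Y::'a::ring)"
  by (induction k) (simp_all add: adb_uminus_right)

lemma adb_pow_uminus_left: "(adb (- X) ^^ k) Y = ((-1) ^ k :: real) *\<^sub>R (adb X ^^ k) (Y::'a::real_algebra)"
proof (induction k)
  case 0 then show ?case by simp
next
  case (Suc k)
  have "(adb (- X) ^^ Suc k) Y = adb (- X) ((adb (- X) ^^ k) Y)" by simp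
  also have "\<dots> = - adb X (((-1) ^ k :: real) *\<^sub>R (adb X ^^ k) Y)"
    by (simp only: Suc adb_uminus_left)
  also have "\<dots> = ((-1) ^ Suc k :: real) *\<^sub>R (adb X ^^ Suc k) Y"
    by (simp add: adb_def algebra_simps)
  finally show ?case .
qed

lemma gen_identity:
  fixes F A :: "'a::{real_normed_algebra_1,banach}"
  shows "(\<Sum>k. (1 / fact k) *\<^sub>R (adb (- F) ^^ k) A) + (\<Sum>k. (1 / fact (Suc k)) *\<^sub>R (adb (- F) ^^ k) (- A))
        = (\<Sum>m. cm m *\<^sub>R (adb F ^^ Suc m) A)"
proof -
  define g where "g k = ((-1) ^ k * (1 / fact k - 1 / fact (Suc k))) *\<^sub>R (adb F ^^ k) A" for k
  have s1: "summable (\<lambda>k. (1 / fact k) *\<^sub>R (adb (- F) ^^ k) A)"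
    by (rule summable_norm_cancel, rule summable_norm_adb_series) simp
  have s2: "summable (\<lambda>k. (1 / fact (Suc k)) *\<^sub>R (adb (- F) ^^ k) (- A))"
  proof (rule summable_norm_cancel, rule summable_norm_adb_series)
    fix k :: nat
    have "fact k \<le> (fact (Suc k) :: real)" by (rule fact_mono) simp
    then show "\<bar>1 / fact (Suc k)\<bar> \<le> 1 / (fact k :: real)" by (simp add: frac_le)
  qed
  have eq: "(1 / fact k) *\<^sub>R (adb (- F) ^^ k) A + (1 / fact (Suc k)) *\<^sub>R (adb (- F) ^^ k) (- A) = g k" for k
    unfolding g_def adb_pow_uminus_left adb_pow_uminus_right
    by (simp add: algebra_simps)
  have sg: "summable g" using summable_add[OF s1 s2] unfolding eq .
  have "(\<Sum>k. (1 / fact k) *\<^sub>R (adb (- F) ^^ k) A) + (\<Sum>k. (1 / fact (Suc k)) *\<^sub>R (adb (- F) ^^ k) (- A))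
      = suminf g"
    using suminf_add[OF s1 s2] unfolding eq by simp
  also have "\<dots> = (\<Sum>m. g (Suc m))"
    using suminf_split_head[OF sg] by (simp add: g_def)
  also have "\<dots> = (\<Sum>m. cm m *\<^sub>R (adb F ^^ Suc m) A)"
  proof (rule arg_cong[where f=suminf], rule ext)
    fix m :: nat
    have aux: "(1/x - 1/((real m + 2) * x) :: real) = (real m + 1)/((real m + 2) * x)" if "x > 0" for x
    proof -
      have g: "1/x - 1/(y*x) = (y - 1)/(y*x)" if "x \<noteq> 0" "y \<noteq> 0" for x y :: real
        using that by (simp add: field_simps)
      have "real m + 2 \<noteq> 0" "x \<noteq> 0" using that by auto
      from g[OF this(2,1)] show ?thesis by simp
    qed
    have f2: "fact (Suc (Suc m)) = (real m + 2) * (fact (Suc m) :: real)"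
      by (simp only: fact_Suc[of "Suc m"]) simp
    have "(1 / fact (Suc m) - 1 / fact (Suc (Suc m)) :: real) = real (Suc m) / fact (Suc m + 1)"
    proof -
      have "(1 / fact (Suc m) - 1 / fact (Suc (Suc m)) :: real) = (real m + 1)/((real m + 2) * fact (Suc m))"
        by (simp only: f2 aux[OF fact_gt_zero])
      also have "\<dots> = real (Suc m) / fact (Suc m + 1)"
      proof -
        have "Suc m + 1 = Suc (Suc m)" by simp
        then show ?thesis by (simp only: f2 of_nat_Suc add.commute)
      qed
      finally show ?thesis .
    qed
    then show "g (Suc m) = cm m *\<^sub>R (adb F ^^ Suc m) A"
      unfolding g_def cm_def by simp
  qed
  finally show ?thesis .
qed

lemma V_step:
  fixes F A V :: "real \<Rightarrow> 'a::{real_normed_algebra_1,banach}"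
  assumes F: "(F has_vector_derivative A t) (at t)"
    and V: "(V has_vector_derivative A t * V t) (at t)"
  shows "((\<lambda>s. exp (- F s) * V s) has_vector_derivative
           (\<Sum>m. cm m *\<^sub>R (adb (F t) ^^ Suc m) (A t)) * (exp (- F t) * V t)) (at t)"
proof -
  define D where "D = dexpb (- F t) (- A t)"
  have lin: "linear (dexpb (- F t))"
    using has_derivative_bounded_linear[OF exp_has_derivative_gen[of "- F t"]] bounded_linear.linear by blast
  have mF: "((\<lambda>s. - F s) has_derivative (\<lambda>h. h *\<^sub>R (- A t))) (at t)"
    using F unfolding has_vector_derivative_def by (auto intro: has_derivative_minus[where f'="\<lambda>h. h *\<^sub>R A t", simplified])
  have E: "((\<lambda>s. exp (- F s)) has_derivative (\<lambda>h. h *\<^sub>R D)) (at t)"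
  proof -
    have "((\<lambda>s. exp (- F s)) has_derivative (\<lambda>h. dexpb (- F t) (h *\<^sub>R (- A t)))) (at t)"
      by (rule has_derivative_compose[OF mF exp_has_derivative_gen])
    moreover have "(\<lambda>h. dexpb (- F t) (h *\<^sub>R (- A t))) = (\<lambda>h. h *\<^sub>R D)"
    proof
      fix h show "dexpb (- F t) (h *\<^sub>R (- A t)) = h *\<^sub>R D"
        unfolding D_def by (rule linear_scale[OF lin])
    qed
    ultimately show ?thesis by simp
  qed
  have P: "((\<lambda>s. exp (- F s) * V s) has_derivative
      (\<lambda>h. exp (- F t) * (h *\<^sub>R (A t * V t)) + (h *\<^sub>R D) * V t)) (at t)"
    using has_derivative_mult[OF E V[unfolded has_vector_derivative_def]] .
  have key: "exp (- F t) * (A t * V t) + D * V t = (\<Sum>m. cm m *\<^sub>R (adb (F t) ^^ Suc m) (A t)) * (exp (- F t) * V t)"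
  proof -
    have "exp (- F t) * A t = (\<Sum>k. (1 / fact k) *\<^sub>R (adb (- F t) ^^ k) (A t)) * exp (- F t)"
      by (rule exp_mult_comm)
    moreover have "D = (\<Sum>k. (1 / fact (Suc k)) *\<^sub>R (adb (- F t) ^^ k) (- A t)) * exp (- F t)"
      unfolding D_def dexpb_def ..
    ultimately have "exp (- F t) * (A t * V t) + D * V t =
       ((\<Sum>k. (1 / fact k) *\<^sub>R (adb (- F t) ^^ k) (A t)) + (\<Sum>k. (1 / fact (Suc k)) *\<^sub>R (adb (- F t) ^^ k) (- A t))) * (exp (- F t) * V t)"
      by (simp add: mult.assoc[symmetric] distrib_right)
    then show ?thesis unfolding gen_identity .
  qed
  show ?thesis unfolding has_vector_derivative_def
    using P key by (simp add: scaleR_right_distrib[symmetric] key[symmetric])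
qed


lemma nat_infsum_suminf:
  fixes f :: "nat \<Rightarrow> 'a::banach"
  assumes "summable (\<lambda>n. norm (f n))"
  shows "infsum f UNIV = suminf f"
  by (rule infsumI[OF norm_summable_imp_has_sum[OF assms summable_sums[OF summable_norm_cancel[OF assms]]]])

lemma suminf_swap_abs:
  fixes x :: "nat \<Rightarrow> nat \<Rightarrow> 'a::banach"
  assumes row: "\<And>m. summable (\<lambda>n. norm (x m n))"
    and tot: "summable (\<lambda>m. \<Sum>n. norm (x m n))"
  shows "(\<Sum>m. \<Sum>n. x m n) = (\<Sum>n. \<Sum>m. x m n)"
    and "\<And>n. summable (\<lambda>m. norm (x m n))"
    and "summable (\<lambda>n. \<Sum>m. norm (x m n))"
proof -
  define X where "X = (\<lambda>(m, n). x m n)"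
  have rowon: "(\<lambda>n. norm (x m n)) summable_on UNIV" for m
    by (rule norm_summable_imp_summable_on) (simp add: row)
  have rowinf: "infsum (\<lambda>n. norm (x m n)) UNIV = (\<Sum>n. norm (x m n))" for m
    by (rule nat_infsum_suminf) (simp add: row)
  have totn: "summable (\<lambda>m. norm (\<Sum>n. norm (x m n)))"
  proof -
    have "norm (\<Sum>n. norm (x m n)) = (\<Sum>n. norm (x m n))" for m
      by (simp add: suminf_nonneg row)
    then show ?thesis using tot by simp
  qed
  have absX: "(\<lambda>p. norm (X p)) summable_on (UNIV \<times> UNIV)"
  proof (rule iffD2[OF Infinite_Sum.abs_summable_on_Sigma_iff], intro conjI ballI)
    fix m :: nat show "(\<lambda>n. norm (X (m, n))) summable_on UNIV" using rowon by (simp add: X_def)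
  next
    show "(\<lambda>m. norm (infsum (\<lambda>n. norm (X (m, n))) UNIV)) summable_on UNIV"
      unfolding X_def using rowinf norm_summable_imp_summable_on[OF totn] by (simp add: suminf_nonneg row)
  qed
  have absY: "(\<lambda>p. norm (case p of (n, m) \<Rightarrow> x m n)) summable_on (UNIV \<times> UNIV)"
    using absX unfolding summable_on_swap[of "\<lambda>p. norm (X p)"] by (simp add: X_def case_prod_unfold)
  have colon: "(\<lambda>m. norm (x m n)) summable_on UNIV" for n
    using iffD1[OF Infinite_Sum.abs_summable_on_Sigma_iff absY] by auto
  have colout: "(\<lambda>n. norm (infsum (\<lambda>m. norm (x m n)) UNIV)) summable_on UNIV"
    using iffD1[OF Infinite_Sum.abs_summable_on_Sigma_iff absY] by auto
  show col: "summable (\<lambda>m. norm (x m n))" for n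
    by (rule summable_on_imp_summable[OF colon])
  have colinf: "infsum (\<lambda>m. norm (x m n)) UNIV = (\<Sum>m. norm (x m n))" for n
    by (rule nat_infsum_suminf) (simp add: col)
  have colsum: "summable (\<lambda>n. norm (\<Sum>m. norm (x m n)))"
    using summable_on_imp_summable[OF colout] unfolding colinf by simp
  then show "summable (\<lambda>n. \<Sum>m. norm (x m n))"
    by (simp add: suminf_nonneg col)
  have sw: "infsum (\<lambda>m. infsum (\<lambda>n. x m n) UNIV) UNIV = infsum (\<lambda>n. infsum (\<lambda>m. x m n) UNIV) UNIV"
    using infsum_swap_banach[of "\<lambda>m n. x m n" UNIV UNIV] abs_summable_summable[OF absX]
    by (simp add: X_def)
  have i1: "infsum (\<lambda>n. x m n) UNIV = (\<Sum>n. x m n)" for m by (rule nat_infsum_suminf[OF row])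
  have i2: "infsum (\<lambda>m. x m n) UNIV = (\<Sum>m. x m n)" for n by (rule nat_infsum_suminf[OF col])
  have o1: "infsum (\<lambda>m. \<Sum>n. x m n) UNIV = (\<Sum>m. \<Sum>n. x m n)"
  proof (rule nat_infsum_suminf, rule summable_comparison_test'[OF totn])
    fix m show "norm (norm (\<Sum>n. x m n)) \<le> norm (\<Sum>n. norm (x m n))"
      using summable_norm[OF row[of m]] by simp
  qed
  have o2: "infsum (\<lambda>n. \<Sum>m. x m n) UNIV = (\<Sum>n. \<Sum>m. x m n)"
  proof (rule nat_infsum_suminf, rule summable_comparison_test'[OF colsum])
    fix n show "norm (norm (\<Sum>m. x m n)) \<le> norm (\<Sum>m. norm (x m n))"
      using summable_norm[OF col[of n]] by simp
  qed
  show "(\<Sum>m. \<Sum>n. x m n) = (\<Sum>n. \<Sum>m. x m n)"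
    using sw unfolding i1 i2 o1 o2 .
qed


definition PS :: "real \<Rightarrow> (nat \<Rightarrow> 'a::real_normed_vector) \<Rightarrow> (real \<Rightarrow> 'a) \<Rightarrow> bool" where
  "PS r a f \<longleftrightarrow> summable (\<lambda>n. r ^ n * norm (a n)) \<and> (\<forall>t. \<bar>t\<bar> < r \<longrightarrow> f t = (\<Sum>n. t ^ n *\<^sub>R a n))"

definition Nr :: "real \<Rightarrow> (nat \<Rightarrow> 'a::real_normed_vector) \<Rightarrow> real" where
  "Nr r a = (\<Sum>n. r ^ n * norm (a n))"

definition ordg :: "nat \<Rightarrow> (nat \<Rightarrow> 'a::zero) \<Rightarrow> bool" where
  "ordg q a \<longleftrightarrow> (\<forall>n<q. a n = 0)"

lemma PS_abs:
  assumes "PS r a f" "\<bar>t\<bar> < r"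
  shows "summable (\<lambda>n. norm (t ^ n *\<^sub>R a n))"
proof (rule summable_comparison_test')
  show "summable (\<lambda>n. r ^ n * norm (a n))" using assms(1) by (simp add: PS_def)
  fix n
  have "\<bar>t\<bar> ^ n \<le> r ^ n" by (rule power_mono) (use assms(2) in auto)
  then show "norm (norm (t ^ n *\<^sub>R a n)) \<le> r ^ n * norm (a n)"
    by (simp add: power_abs mult_right_mono)
qed

lemma PS_sums:
  fixes a :: "nat \<Rightarrow> 'a::banach"
  assumes "PS r a f" "\<bar>t\<bar> < r"
  shows "(\<lambda>n. t ^ n *\<^sub>R a n) sums f t"
proof -
  have "summable (\<lambda>n. t ^ n *\<^sub>R a n)" by (rule summable_norm_cancel[OF PS_abs[OF assms]])
  then show ?thesis using assms unfolding PS_def by (simp add: summable_sums)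
qed

lemma Nr_nonneg: "0 \<le> r \<Longrightarrow> PS r a f \<Longrightarrow> 0 \<le> Nr r a"
  unfolding Nr_def PS_def by (intro suminf_nonneg) auto
 
lemma PS_bound:
  fixes a :: "nat \<Rightarrow> 'a::banach"
  assumes r: "0 < r" and P: "PS r a f" and o: "ordg q a" and t: "\<bar>t\<bar> < r"
  shows "norm (f t) \<le> (\<bar>t\<bar> / r) ^ q * Nr r a"
proof -
  have sa: "summable (\<lambda>n. r ^ n * norm (a n))" using P by (simp add: PS_def)
  have "norm (f t) = norm (\<Sum>n. t ^ n *\<^sub>R a n)" using P t by (simp add: PS_def)
  also have "\<dots> \<le> (\<Sum>n. norm (t ^ n *\<^sub>R a n))" by (rule summable_norm[OF PS_abs[OF P t]])
  also have "\<dots> \<le> (\<Sum>n. (\<bar>t\<bar> / r) ^ q * (r ^ n * norm (a n)))"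
  proof (rule suminf_le)
    show "summable (\<lambda>n. norm (t ^ n *\<^sub>R a n))" by (rule PS_abs[OF P t])
    show "summable (\<lambda>n. (\<bar>t\<bar> / r) ^ q * (r ^ n * norm (a n)))" by (intro summable_mult sa)
    fix n
    show "norm (t ^ n *\<^sub>R a n) \<le> (\<bar>t\<bar> / r) ^ q * (r ^ n * norm (a n))"
    proof (cases "n < q")
      case True then show ?thesis using o by (simp add: ordg_def)
    next
      case False
      have "\<bar>t\<bar> ^ n = (\<bar>t\<bar> / r) ^ n * r ^ n" using r by (simp add: power_divide)
      also have "\<dots> \<le> (\<bar>t\<bar> / r) ^ q * r ^ n"
        by (rule mult_right_mono, rule power_decreasing) (use False r t in auto)
      finally have "\<bar>t\<bar> ^ n * norm (a n) \<le> (\<bar>t\<bar> / r) ^ q * r ^ n * norm (a n)"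
        by (rule mult_right_mono) simp
      then show ?thesis by (simp add: power_abs mult.assoc)
    qed
  qed
  also have "\<dots> = (\<bar>t\<bar> / r) ^ q * Nr r a" unfolding Nr_def by (rule suminf_mult[OF sa])
  finally show ?thesis .
qed

lemma PS_scaleR:
  fixes a :: "nat \<Rightarrow> 'a::banach"
  assumes P: "PS r a f"
  shows "PS r (\<lambda>n. c *\<^sub>R a n) (\<lambda>t. c *\<^sub>R f t) \<and> Nr r (\<lambda>n. c *\<^sub>R a n) = \<bar>c\<bar> * Nr r a"
proof -
  have sa: "summable (\<lambda>n. r ^ n * norm (a n))" using P by (simp add: PS_def)
  have e: "(\<lambda>n. r ^ n * norm (c *\<^sub>R a n)) = (\<lambda>n. \<bar>c\<bar> * (r ^ n * norm (a n)))"
    by (simp add: fun_eq_iff algebra_simps)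
  have "f t = (\<Sum>n. t ^ n *\<^sub>R a n)" if "\<bar>t\<bar> < r" for t using P that by (simp add: PS_def)
  moreover have "c *\<^sub>R (\<Sum>n. t ^ n *\<^sub>R a n) = (\<Sum>n. t ^ n *\<^sub>R (c *\<^sub>R a n))" if "\<bar>t\<bar> < r" for t
    using suminf_scaleR_right[OF summable_norm_cancel[OF PS_abs[OF P that]], of c]
    by (simp add: algebra_simps)
  ultimately show ?thesis
    unfolding PS_def Nr_def e using sa by (simp add: suminf_mult summable_mult)
qed

lemma PS_diff:
  fixes a b :: "nat \<Rightarrow> 'a::banach"
  assumes P: "PS r a f" and Q: "PS r b g" and r: "0 \<le> r"
  shows "PS r (\<lambda>n. a n - b n) (\<lambda>t. f t - g t) \<and> Nr r (\<lambda>n. a n - b n) \<le> Nr r a + Nr r b"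
proof -
  have sa: "summable (\<lambda>n. r ^ n * norm (a n))" using P by (simp add: PS_def)
  have sb: "summable (\<lambda>n. r ^ n * norm (b n))" using Q by (simp add: PS_def)
  have le: "r ^ n * norm (a n - b n) \<le> r ^ n * norm (a n) + r ^ n * norm (b n)" for n
    using mult_left_mono[OF norm_triangle_ineq4[of "a n" "b n"], of "r ^ n"] r by (simp add: algebra_simps)
  have s: "summable (\<lambda>n. r ^ n * norm (a n - b n))"
    by (rule summable_comparison_test'[OF summable_add[OF sa sb]]) (use le r in auto)
  have "f t - g t = (\<Sum>n. t ^ n *\<^sub>R (a n - b n))" if "\<bar>t\<bar> < r" for t
    using sums_unique[OF sums_diff[OF PS_sums[OF P that] PS_sums[OF Q that]]]
    by (simp add: algebra_simps)
  moreover have "Nr r (\<lambda>n. a n - b n) \<le> Nr r a + Nr r b"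
    unfolding Nr_def using suminf_le[OF le s summable_add[OF sa sb]] suminf_add[OF sa sb] by simp
  ultimately show ?thesis unfolding PS_def using s by simp
qed

definition cprod :: "(nat \<Rightarrow> 'a::real_normed_algebra) \<Rightarrow> (nat \<Rightarrow> 'a) \<Rightarrow> nat \<Rightarrow> 'a" where
  "cprod a b n = (\<Sum>i\<le>n. a i * b (n - i))"

lemma PS_mult:
  fixes a b :: "nat \<Rightarrow> 'a::{real_normed_algebra,banach}"
  assumes P: "PS r a f" and Q: "PS r b g" and r: "0 < r"
  shows "PS r (cprod a b) (\<lambda>t. f t * g t) \<and> Nr r (cprod a b) \<le> Nr r a * Nr r b"
proof -
  define A where "A n = r ^ n * norm (a n)" for n
  define B where "B n = r ^ n * norm (b n)" for n
  have sA: "summable A" using P by (simp add: PS_def A_def[abs_def])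
  have sB: "summable B" using Q by (simp add: PS_def B_def[abs_def])
  have A0: "0 \<le> A n" for n using r by (simp add: A_def)
  have B0: "0 \<le> B n" for n using r by (simp add: B_def)
  have C: "(\<lambda>n. \<Sum>i\<le>n. A i * B (n - i)) sums (suminf A * suminf B)"
    by (rule Cauchy_product_sums) (use sA sB A0 B0 in auto)
  have le: "r ^ n * norm (cprod a b n) \<le> (\<Sum>i\<le>n. A i * B (n - i))" for n
  proof -
    have "norm (cprod a b n) \<le> (\<Sum>i\<le>n. norm (a i * b (n - i)))" unfolding cprod_def by (rule norm_sum)
    also have "\<dots> \<le> (\<Sum>i\<le>n. norm (a i) * norm (b (n - i)))" by (intro sum_mono norm_mult_ineq)
    finally have "r ^ n * norm (cprod a b n) \<le> r ^ n * (\<Sum>i\<le>n. norm (a i) * norm (b (n - i)))"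
      using r by (intro mult_left_mono) auto
    also have "\<dots> = (\<Sum>i\<le>n. A i * B (n - i))"
      unfolding sum_distrib_left A_def B_def
    proof (intro sum.cong refl)
      fix i assume "i \<in> {..n}"
      then have "r ^ n = r ^ i * r ^ (n - i)" by (simp add: power_add[symmetric])
      then show "r ^ n * (norm (a i) * norm (b (n - i))) = r ^ i * norm (a i) * (r ^ (n - i) * norm (b (n - i)))"
        by (simp add: algebra_simps)
    qed
    finally show ?thesis .
  qed
  have s: "summable (\<lambda>n. r ^ n * norm (cprod a b n))"
    by (rule summable_comparison_test'[OF sums_summable[OF C]]) (use le r in auto)
  have N: "Nr r (cprod a b) \<le> Nr r a * Nr r b"
    unfolding Nr_def using suminf_le[OF le s sums_summable[OF C]] sums_unique[OF C] A_def B_def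
    by (simp add: A_def[abs_def] B_def[abs_def])
  have V: "f t * g t = (\<Sum>n. t ^ n *\<^sub>R cprod a b n)" if t: "\<bar>t\<bar> < r" for t
  proof -
    have "(\<lambda>n. \<Sum>i\<le>n. (t ^ i *\<^sub>R a i) * (t ^ (n - i) *\<^sub>R b (n - i))) sums
        ((\<Sum>n. t ^ n *\<^sub>R a n) * (\<Sum>n. t ^ n *\<^sub>R b n))"
      by (rule Cauchy_product_sums[OF PS_abs[OF P t] PS_abs[OF Q t]])
    moreover have "(\<Sum>n. t ^ n *\<^sub>R a n) = f t" "(\<Sum>n. t ^ n *\<^sub>R b n) = g t"
      using sums_unique[OF PS_sums[OF P t]] sums_unique[OF PS_sums[OF Q t]] by auto
    moreover have "(\<Sum>i\<le>n. (t ^ i *\<^sub>R a i) * (t ^ (n - i) *\<^sub>R b (n - i))) = t ^ n *\<^sub>R cprod a b n" for n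
      unfolding cprod_def scaleR_sum_right
    proof (intro sum.cong refl)
      fix i assume "i \<in> {..n}"
      then have "t ^ n = t ^ i * t ^ (n - i)" by (simp add: power_add[symmetric])
      then show "(t ^ i *\<^sub>R a i) * (t ^ (n - i) *\<^sub>R b (n - i)) = t ^ n *\<^sub>R (a i * b (n - i))"
        by simp
    qed
    ultimately show ?thesis by (simp add: sums_iff)
  qed
  show ?thesis unfolding PS_def using s N V by simp
qed


definition integ :: "(nat \<Rightarrow> 'a::real_vector) \<Rightarrow> nat \<Rightarrow> 'a" where
  "integ a n = (case n of 0 \<Rightarrow> 0 | Suc m \<Rightarrow> (1 / real (Suc m)) *\<^sub>R a m)"

lemma integ_0[simp]: "integ a 0 = 0" and integ_Suc[simp]: "integ a (Suc m) = (1 / real (Suc m)) *\<^sub>R a m"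
  by (simp_all add: integ_def)

lemma ordg_integ: "ordg q a \<Longrightarrow> ordg (Suc q) (integ a)"
  unfolding ordg_def by (auto simp: integ_def split: nat.splits)

lemma PS_integ:
  fixes a :: "nat \<Rightarrow> 'a::banach"
  assumes r: "0 < r" and P: "PS r a f"
  shows "PS r (integ a) (oint f) \<and> Nr r (integ a) \<le> r * Nr r a \<and>
         (\<forall>t. \<bar>t\<bar> < r \<longrightarrow> (oint f has_vector_derivative f t) (at t))"
proof -
  have sa: "summable (\<lambda>m. r ^ m * norm (a m))" using P by (simp add: PS_def)
  define X where "X n = r ^ n * norm (integ a n)" for n
  have le: "X (Suc m) \<le> r * (r ^ m * norm (a m))" for m
  proof -
    have "X (Suc m) = r * (r ^ m * norm (a m)) / real (Suc m)" using r by (simp add: X_def)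
    also have "\<dots> \<le> r * (r ^ m * norm (a m)) / 1"
      by (intro divide_left_mono) (use r in auto)
    also have "\<dots> = r * (r ^ m * norm (a m))" by (rule div_by_1)
    finally show ?thesis .
  qed
  have sX1: "summable (\<lambda>m. X (Suc m))"
    by (rule summable_comparison_test'[OF summable_mult[OF sa, of r]]) (use le r in \<open>auto simp: X_def\<close>)
  then have sX: "summable X" by (simp add: summable_Suc_iff)
  have X0: "X 0 = 0" by (simp add: X_def)
  have NI: "Nr r (integ a) \<le> r * Nr r a"
  proof -
    have "Nr r (integ a) = (\<Sum>m. X (Suc m))"
      using suminf_split_head[OF sX] X0 by (simp add: Nr_def X_def[abs_def])
    also have "\<dots> \<le> (\<Sum>m. r * (r ^ m * norm (a m)))" by (rule suminf_le[OF le sX1 summable_mult[OF sa]])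
    also have "\<dots> = r * Nr r a" unfolding Nr_def by (rule suminf_mult[OF sa])
    finally show ?thesis .
  qed
  define d where "d n s = (case n of 0 \<Rightarrow> 0 | Suc m \<Rightarrow> s ^ m *\<^sub>R a m)" for n and s :: real
  define c where "c n = (case n of 0 \<Rightarrow> 0 | Suc m \<Rightarrow> r ^ m * norm (a m))" for n
  define S where "S = ball (0::real) r"
  have inS: "s \<in> S \<longleftrightarrow> \<bar>s\<bar> < r" for s by (simp add: S_def)
  have "summable (\<lambda>m. c (Suc m))" using sa by (simp add: c_def)
  then have cs: "summable c" by (simp only: summable_Suc_iff)
  have dsum: "(\<lambda>n. d n s) sums f s" if "\<bar>s\<bar> < r" for s
  proof -
    have "(\<lambda>n. d (Suc n) s) sums f s" using PS_sums[OF P that] by (simp add: d_def)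
    then have "(\<lambda>n. d n s) sums (f s + d 0 s)" by (rule iffD1[OF sums_Suc_iff[of "\<lambda>n. d n s"]])
    then show ?thesis by (simp add: d_def)
  qed
  have dbound: "norm (d n s) \<le> c n" if "\<bar>s\<bar> < r" for n s
  proof (cases n)
    case 0 then show ?thesis by (simp add: d_def c_def)
  next
    case (Suc m)
    have "\<bar>s\<bar> ^ m \<le> r ^ m" by (rule power_mono) (use that in auto)
    then show ?thesis using Suc by (simp add: d_def c_def power_abs mult_right_mono)
  qed
  have "\<exists>g. \<forall>x\<in>S. (\<lambda>n. x ^ n *\<^sub>R integ a n) sums g x \<and> (g has_derivative (\<lambda>h. h *\<^sub>R f x)) (at x within S)"
  proof (rule has_derivative_series[where f'="\<lambda>n x h. h *\<^sub>R d n x"])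
    show "convex S" by (simp add: S_def)
    show "(0::real) \<in> S" using r by (simp add: S_def)
    show "(\<lambda>n. (0::real) ^ n *\<^sub>R integ a n) sums 0"
      by (rule sums_0) (simp add: power_0_left)
  next
    fix n :: nat and x :: real assume "x \<in> S"
    have "((\<lambda>s. s ^ n *\<^sub>R integ a n) has_vector_derivative ((real n * x ^ (n - Suc 0)) *\<^sub>R integ a n)) (at x within S)"
      using has_vector_derivative_scaleR[OF DERIV_pow has_vector_derivative_const] by simp
    moreover have "(real n * x ^ (n - Suc 0)) *\<^sub>R integ a n = d n x"
      by (cases n) (simp_all add: d_def)
    ultimately show "((\<lambda>s. s ^ n *\<^sub>R integ a n) has_derivative (\<lambda>h. h *\<^sub>R d n x)) (at x within S)"
      by (simp add: has_vector_derivative_def)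
  next
    fix e :: real assume e: "0 < e"
    obtain N where N: "\<And>n. n \<ge> N \<Longrightarrow> norm (\<Sum>i. c (i + n)) < e"
      using suminf_exist_split[OF e cs] by blast
    show "\<forall>\<^sub>F n in sequentially. \<forall>x\<in>S. \<forall>h. norm ((\<Sum>i<n. h *\<^sub>R d i x) - h *\<^sub>R f x) \<le> e * norm h"
    proof (rule eventually_sequentiallyI[of N], intro ballI allI)
      fix n x h assume n: "N \<le> n" and x: "x \<in> S"
      then have xr: "\<bar>x\<bar> < r" by (simp add: inS)
      have "(\<lambda>i. d (i + n) x) sums (f x - (\<Sum>i<n. d i x))"
        using sums_split_initial_segment[OF dsum[OF xr], of n] by simp
      then have eq: "(\<Sum>i<n. d i x) - f x = - (\<Sum>i. d (i + n) x)"
        by (simp add: sums_iff)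
      have cs': "summable (\<lambda>i. c (i + n))" by (intro summable_ignore_initial_segment cs)
      have "norm (\<Sum>i. d (i + n) x) \<le> (\<Sum>i. c (i + n))"
        by (rule norm_suminf_le[OF dbound[OF xr] cs'])
      also have "\<dots> \<le> e"
      proof -
        have "(\<Sum>i. c (i + n)) \<le> norm (\<Sum>i. c (i + n))" by simp
        then show ?thesis using N[OF n] by linarith
      qed
      finally have "norm ((\<Sum>i<n. d i x) - f x) \<le> e" unfolding eq by simp
      then have "\<bar>h\<bar> * norm ((\<Sum>i<n. d i x) - f x) \<le> \<bar>h\<bar> * e" by (rule mult_left_mono) simp
      then show "norm ((\<Sum>i<n. h *\<^sub>R d i x) - h *\<^sub>R f x) \<le> e * norm h"
        by (simp add: scaleR_sum_right[symmetric] scaleR_diff_right[symmetric] mult.commute)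
    qed
  qed
  then obtain g where g: "\<And>x. x \<in> S \<Longrightarrow> (\<lambda>n. x ^ n *\<^sub>R integ a n) sums g x"
    "\<And>x. x \<in> S \<Longrightarrow> (g has_derivative (\<lambda>h. h *\<^sub>R f x)) (at x within S)" by blast
  define G where "G t = (\<Sum>n. t ^ n *\<^sub>R integ a n)" for t
  have Gg: "G x = g x" if "x \<in> S" for x using g(1)[OF that] by (simp add: G_def sums_iff)
  have G0: "G 0 = 0"
  proof -
    have "(\<lambda>n. (0::real) ^ n *\<^sub>R integ a n) = (\<lambda>n. 0)"
    proof
      fix n show "(0::real) ^ n *\<^sub>R integ a n = 0" by (cases n) simp_all
    qed
    then show ?thesis unfolding G_def by simp
  qed
  have GD: "(G has_vector_derivative f x) (at x)" if "\<bar>x\<bar> < r" for x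
  proof -
    have xS: "x \<in> S" using that by (simp add: inS)
    have "(g has_vector_derivative f x) (at x)"
      using g(2)[OF xS] at_within_open[OF xS] unfolding has_vector_derivative_def S_def by simp
    then show ?thesis
      by (rule has_vector_derivative_transform_within_open[where S=S]) (use xS Gg in \<open>auto simp: S_def\<close>)
  qed
  have OG: "oint f t = G t" if t: "\<bar>t\<bar> < r" for t
  proof (cases "0 \<le> t")
    case True
    have "(f has_integral (G t - G 0)) {0..t}"
      by (rule fundamental_theorem_of_calculus[OF True])
        (use t True in \<open>auto intro!: has_vector_derivative_at_within GD\<close>)
    then show ?thesis using True G0 by (simp add: oint_def integral_unique)
  next
    case False
    have "(f has_integral (G 0 - G t)) {t..0}"
      by (rule fundamental_theorem_of_calculus) (use t False in \<open>auto intro!: has_vector_derivative_at_within GD\<close>)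
    then show ?thesis using False G0 by (simp add: oint_def integral_unique)
  qed
  have OD: "(oint f has_vector_derivative f t) (at t)" if t: "\<bar>t\<bar> < r" for t
  proof -
    have tS: "t \<in> S" using t by (simp add: inS)
    show ?thesis
      by (rule has_vector_derivative_transform_within_open[OF GD[OF t], where S=S])
        (use tS OG in \<open>auto simp: S_def\<close>)
  qed
  show ?thesis using OG sX NI OD unfolding PS_def G_def X_def[abs_def] by auto
qed


lemma PS_suminf:
  fixes a :: "nat \<Rightarrow> nat \<Rightarrow> 'a::banach"
  assumes r: "0 < r" and P: "\<And>m. PS r (a m) (f m)" and s: "summable (\<lambda>m. Nr r (a m))"
  shows "PS r (\<lambda>n. \<Sum>m. a m n) (\<lambda>t. \<Sum>m. f m t) \<and> Nr r (\<lambda>n. \<Sum>m. a m n) \<le> (\<Sum>m. Nr r (a m))"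
proof -
  define y where "y m n = r ^ n * norm (a m n)" for m n
  have y0: "0 \<le> y m n" for m n using r by (simp add: y_def)
  have row: "summable (\<lambda>n. norm (y m n))" for m using P[of m] y0 by (simp add: PS_def y_def[abs_def])
  have tot: "summable (\<lambda>m. \<Sum>n. norm (y m n))" using s y0 by (simp add: Nr_def y_def[abs_def])
  note SW = suminf_swap_abs[of y, OF row tot]
  have col: "summable (\<lambda>m. r ^ n * norm (a m n))" for n using SW(2)[of n] y0 by (simp add: y_def)
  have cola: "summable (\<lambda>m. norm (a m n))" for n
    using summable_mult[OF col[of n], of "inverse (r ^ n)"] r by (simp add: field_simps)
  have tot2: "summable (\<lambda>n. \<Sum>m. r ^ n * norm (a m n))" using SW(3) y0 by (simp add: y_def)
  have swy: "(\<Sum>m. \<Sum>n. r ^ n * norm (a m n)) = (\<Sum>n. \<Sum>m. r ^ n * norm (a m n))"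
    using SW(1) by (simp add: y_def)
  define b where "b n = (\<Sum>m. a m n)" for n
  have bl: "r ^ n * norm (b n) \<le> (\<Sum>m. r ^ n * norm (a m n))" for n
  proof -
    have "norm (b n) \<le> (\<Sum>m. norm (a m n))" unfolding b_def by (rule summable_norm[OF cola])
    then have "r ^ n * norm (b n) \<le> r ^ n * (\<Sum>m. norm (a m n))" using r by (intro mult_left_mono) auto
    also have "\<dots> = (\<Sum>m. r ^ n * norm (a m n))" by (rule suminf_mult[OF cola, symmetric])
    finally show ?thesis .
  qed
  have sb: "summable (\<lambda>n. r ^ n * norm (b n))"
    by (rule summable_comparison_test'[OF tot2]) (use bl r in auto)
  have Nb: "Nr r b \<le> (\<Sum>m. Nr r (a m))"
  proof -
    have "Nr r b \<le> (\<Sum>n. \<Sum>m. r ^ n * norm (a m n))" unfolding Nr_def by (rule suminf_le[OF bl sb tot2])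
    also have "\<dots> = (\<Sum>m. Nr r (a m))" unfolding Nr_def swy ..
    finally show ?thesis .
  qed
  have V: "(\<Sum>m. f m t) = (\<Sum>n. t ^ n *\<^sub>R b n)" if t: "\<bar>t\<bar> < r" for t
  proof -
    define x where "x m n = t ^ n *\<^sub>R a m n" for m n
    have xrow: "summable (\<lambda>n. norm (x m n))" for m unfolding x_def by (rule PS_abs[OF P t])
    have xle: "(\<Sum>n. norm (x m n)) \<le> Nr r (a m)" for m
    proof -
      have "norm (x m n) \<le> r ^ n * norm (a m n)" for n
      proof -
        have "\<bar>t\<bar> ^ n \<le> r ^ n" by (rule power_mono) (use t in auto)
        then show ?thesis by (simp add: x_def power_abs mult_right_mono)
      qed
      then show ?thesis unfolding Nr_def
        by (rule suminf_le[OF _ xrow]) (use P[of m] in \<open>simp add: PS_def\<close>)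
    qed
    have xtot: "summable (\<lambda>m. \<Sum>n. norm (x m n))"
    proof (rule summable_comparison_test'[OF s])
      fix m
      have "0 \<le> (\<Sum>n. norm (x m n))" by (intro suminf_nonneg xrow) simp
      then show "norm (\<Sum>n. norm (x m n)) \<le> Nr r (a m)" using xle[of m] by simp
    qed
    have "(\<Sum>m. f m t) = (\<Sum>m. \<Sum>n. x m n)"
      using P t by (simp add: PS_def x_def)
    also have "\<dots> = (\<Sum>n. \<Sum>m. x m n)" by (rule suminf_swap_abs(1)[OF xrow xtot])
    also have "\<dots> = (\<Sum>n. t ^ n *\<^sub>R b n)"
      unfolding x_def b_def
    proof (intro arg_cong[where f=suminf] ext)
      fix n
      show "(\<Sum>m. t ^ n *\<^sub>R a m n) = t ^ n *\<^sub>R (\<Sum>m. a m n)"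
        by (rule suminf_scaleR_right[symmetric]) (rule summable_norm_cancel[OF cola])
    qed
    finally show ?thesis .
  qed
  show ?thesis using sb Nb V unfolding PS_def b_def by auto
qed


lemma ordg_cprod:
  assumes "ordg p a" "ordg q b"
  shows "ordg (p + q) (cprod a b)"
  unfolding ordg_def cprod_def
proof (intro allI impI sum.neutral ballI)
  fix n i assume n: "n < p + q" and i: "i \<in> {..n}"
  show "a i * b (n - i) = 0"
  proof (cases "i < p")
    case True then show ?thesis using assms(1) by (simp add: ordg_def)
  next
    case False then have "n - i < q" using n i by auto
    then show ?thesis using assms(2) by (simp add: ordg_def)
  qed
qed

lemma ordg_mono: "ordg q a \<Longrightarrow> p \<le> q \<Longrightarrow> ordg p a"
  by (simp add: ordg_def)

definition cad :: "(nat \<Rightarrow> 'a::real_normed_algebra) \<Rightarrow> (nat \<Rightarrow> 'a) \<Rightarrow> nat \<Rightarrow> 'a" where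
  "cad x y = (\<lambda>n. cprod x y n - cprod y x n)"

lemma sum_single:
  assumes "finite A" "k \<in> A" "\<And>i. i \<in> A \<Longrightarrow> i \<noteq> k \<Longrightarrow> g i = 0"
  shows "sum g A = g k"
proof -
  have "sum g A = g k + sum g (A - {k})" by (rule sum.remove[OF assms(1,2)])
  also have "sum g (A - {k}) = 0" by (rule sum.neutral) (use assms(3) in auto)
  finally show ?thesis by simp
qed

lemma ordg_cancel:
  fixes a :: "nat \<Rightarrow> 'a::{real_normed_algebra}"
  assumes o: "ordg q a"
  shows "ordg (2 * q + 2) (cad (integ a) a)"
proof -
  have oi: "ordg (Suc q) (integ a)" by (rule ordg_integ[OF o])
  have o1: "ordg (Suc q + q) (cprod (integ a) a)" by (rule ordg_cprod[OF oi o])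
  have o2: "ordg (q + Suc q) (cprod a (integ a))" by (rule ordg_cprod[OF o oi])
  have e1: "cprod (integ a) a (2 * q + 1) = integ a (Suc q) * a (2 * q + 1 - Suc q)"
    unfolding cprod_def
  proof (rule sum_single)
    fix i assume iN: "i \<in> {..2 * q + 1}" and "i \<noteq> Suc q"
    then show "integ a i * a (2 * q + 1 - i) = 0"
    proof (cases "i < Suc q")
      case True then show ?thesis using oi by (simp add: ordg_def)
    next
      case False then have "2 * q + 1 - i < q" using \<open>i \<noteq> Suc q\<close> iN by auto
      then show ?thesis using o by (simp add: ordg_def)
    qed
  qed (auto simp: numeral_2_eq_2)
  have e2: "cprod a (integ a) (2 * q + 1) = a q * integ a (2 * q + 1 - q)"
    unfolding cprod_def
  proof (rule sum_single)
    fix i assume iN: "i \<in> {..2 * q + 1}" and "i \<noteq> q"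
    then show "a i * integ a (2 * q + 1 - i) = 0"
    proof (cases "i < q")
      case True then show ?thesis using o by (simp add: ordg_def)
    next
      case False then have "2 * q + 1 - i < Suc q" using \<open>i \<noteq> q\<close> iN by auto
      then show ?thesis using oi by (simp add: ordg_def)
    qed
  qed (auto simp: numeral_2_eq_2)
  have e3: "integ a (Suc q) * a q = a q * integ a (Suc q)"
    by (simp add: mult_scaleR_left mult_scaleR_right)
  show ?thesis unfolding ordg_def cad_def
  proof (intro allI impI)
    fix n :: nat assume n: "n < 2 * q + 2"
    show "cprod (integ a) a n - cprod a (integ a) n = 0"
    proof (cases "n = 2 * q + 1")
      case True
      have "2 * q + 1 - Suc q = q" "2 * q + 1 - q = Suc q" by auto
      with True show ?thesis using e1 e2 e3 by simp
    next
      case False then have "n < Suc q + q" using n by auto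
      then show ?thesis using o1 o2 by (simp add: ordg_def)
    qed
  qed
qed

lemma ordg_cad_left:
  assumes "ordg q x"
  shows "ordg q (cad y x)"
proof -
  have "ordg (0 + q) (cprod y x)" by (rule ordg_cprod) (use assms in \<open>auto simp: ordg_def\<close>)
  moreover have "ordg (q + 0) (cprod x y)" by (rule ordg_cprod) (use assms in \<open>auto simp: ordg_def\<close>)
  ultimately show ?thesis by (simp add: ordg_def cad_def)
qed

lemma ordg_cad_pow:
  fixes a :: "nat \<Rightarrow> 'a::{real_normed_algebra}"
  assumes o: "ordg q a"
  shows "ordg (2 * q + 2) ((cad (integ a) ^^ Suc m) a)"
proof (induction m)
  case 0 then show ?case using ordg_cancel[OF o] by simp
next
  case (Suc m) then show ?case by (simp add: ordg_cad_left del: funpow.simps) (simp add: ordg_cad_left)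
qed


lemma PS_cad:
  fixes x y :: "nat \<Rightarrow> 'a::{real_normed_algebra_1,banach}"
  assumes r: "0 < r" and P: "PS r x X" and Q: "PS r y Y"
  shows "PS r (cad x y) (\<lambda>t. adb (X t) (Y t)) \<and> Nr r (cad x y) \<le> 2 * Nr r x * Nr r y"
proof -
  note M1 = PS_mult[OF P Q r] and M2 = PS_mult[OF Q P r]
  note D = PS_diff[OF conjunct1[OF M1] conjunct1[OF M2] less_imp_le[OF r]]
  have "PS r (cad x y) (\<lambda>t. adb (X t) (Y t))"
    using D r unfolding cad_def adb_def by simp
  moreover have "Nr r (cad x y) \<le> 2 * Nr r x * Nr r y"
    using D r M1 M2 unfolding cad_def by (simp add: algebra_simps)
  ultimately show ?thesis by simp
qed

lemma PS_cad_pow: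
  fixes x a :: "nat \<Rightarrow> 'a::{real_normed_algebra_1,banach}"
  assumes r: "0 < r" and P: "PS r x X" and Q: "PS r a A"
  shows "PS r ((cad x ^^ k) a) (\<lambda>t. (adb (X t) ^^ k) (A t)) \<and> Nr r ((cad x ^^ k) a) \<le> (2 * Nr r x) ^ k * Nr r a"
proof (induction k)
  case 0 then show ?case using Q by simp
next
  case (Suc k)
  note C = PS_cad[OF r P conjunct1[OF Suc]]
  have nx: "0 \<le> Nr r x" by (rule Nr_nonneg[OF _ P]) (use r in simp)
  have "Nr r ((cad x ^^ Suc k) a) \<le> 2 * Nr r x * Nr r ((cad x ^^ k) a)" using C by simp
  also have "\<dots> \<le> 2 * Nr r x * ((2 * Nr r x) ^ k * Nr r a)"
    by (intro mult_left_mono conjunct2[OF Suc]) (use nx in simp)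
  finally show ?case using C by (simp add: algebra_simps)
qed

lemma cm_bound: "\<bar>cm m\<bar> \<le> 1 / fact m"
proof -
  have f: "fact (Suc m + 1) = (real m + 2) * ((real m + 1) * (fact m :: real))"
    by (simp add: algebra_simps)
  have "\<bar>cm m\<bar> = (real m + 1) / ((real m + 2) * ((real m + 1) * fact m))"
    unfolding cm_def f by (simp add: abs_mult power_abs add.commute)
  also have "\<dots> = 1 / ((real m + 2) * fact m)" by simp
  also have "\<dots> \<le> 1 / fact m"
    by (rule divide_left_mono) (auto intro: mult_pos_pos)
  finally show ?thesis .
qed

lemma summable_cm: "summable (\<lambda>m. \<bar>cm m\<bar>)"
proof (rule summable_comparison_test')
  show "summable (\<lambda>m. inverse (fact m) * (1::real) ^ m)" by (rule summable_exp)
  fix m show "norm \<bar>cm m\<bar> \<le> inverse (fact m) * (1::real) ^ m"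
    using cm_bound[of m] by (simp add: divide_inverse)
qed

definition Kc :: real where "Kc = (\<Sum>m. \<bar>cm m\<bar>)"

lemma Kc_nonneg: "0 \<le> Kc"
  unfolding Kc_def by (intro suminf_nonneg summable_cm) simp

lemma PS_step:
  fixes a :: "nat \<Rightarrow> 'a::{real_normed_algebra_1,banach}"
  assumes r: "0 < r" and P: "PS r a A" and o: "ordg q a" and small: "2 * r * Nr r a \<le> 1"
  shows "\<exists>b. PS r b (\<lambda>t. \<Sum>m. cm m *\<^sub>R (adb (oint A t) ^^ Suc m) (A t)) \<and> ordg (2 * q + 2) b
             \<and> Nr r b \<le> Kc * (2 * r * Nr r a ^ 2)"
proof -
  note I = PS_integ[OF r P]
  have PI: "PS r (integ a) (oint A)" using I by simp
  have NI: "Nr r (integ a) \<le> r * Nr r a" using I by simp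
  have na: "0 \<le> Nr r a" by (rule Nr_nonneg[OF _ P]) (use r in simp)
  have ni: "0 \<le> Nr r (integ a)" by (rule Nr_nonneg[OF _ PI]) (use r in simp)
  define D where "D m = (cad (integ a) ^^ Suc m) a" for m
  have PD: "PS r (D m) (\<lambda>t. (adb (oint A t) ^^ Suc m) (A t))" for m
    using PS_cad_pow[OF r PI P, of "Suc m"] by (simp add: D_def)
  have ND: "Nr r (D m) \<le> 2 * r * Nr r a * Nr r a" for m
  proof -
    have "Nr r (D m) \<le> (2 * Nr r (integ a)) ^ Suc m * Nr r a"
      using PS_cad_pow[OF r PI P, of "Suc m"] by (simp add: D_def)
    also have "(2 * Nr r (integ a)) ^ Suc m \<le> 2 * Nr r (integ a)"
    proof -
      have "2 * Nr r (integ a) \<le> 1" using NI small by simp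
      then have "(2 * Nr r (integ a)) ^ m \<le> 1" by (intro power_le_one) (use ni in simp_all)
      then show ?thesis using ni by (simp add: mult_left_le)
    qed
    then have "(2 * Nr r (integ a)) ^ Suc m * Nr r a \<le> 2 * Nr r (integ a) * Nr r a"
      by (rule mult_right_mono) (rule na)
    also have "\<dots> \<le> 2 * (r * Nr r a) * Nr r a" by (intro mult_right_mono mult_left_mono NI na) simp
    finally show ?thesis by (simp add: mult.assoc)
  qed
  define e where "e m = (\<lambda>n. cm m *\<^sub>R D m n)" for m
  have PE: "PS r (e m) (\<lambda>t. cm m *\<^sub>R (adb (oint A t) ^^ Suc m) (A t))" for m
    using PS_scaleR[OF PD[of m], of "cm m"] by (simp add: e_def)
  have NE: "Nr r (e m) = \<bar>cm m\<bar> * Nr r (D m)" for m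
    using PS_scaleR[OF PD[of m], of "cm m"] by (simp add: e_def)
  define C where "C = 2 * r * Nr r a * Nr r a"
  have NEle: "Nr r (e m) \<le> \<bar>cm m\<bar> * C" for m
    unfolding NE C_def by (intro mult_left_mono ND) simp
  have NE0: "0 \<le> Nr r (e m)" for m by (rule Nr_nonneg[OF _ PE]) (use r in simp)
  have sE: "summable (\<lambda>m. Nr r (e m))"
    by (rule summable_comparison_test'[OF summable_mult2[OF summable_cm, of C]]) (use NEle NE0 in auto)
  note S = PS_suminf[OF r PE sE]
  have "ordg (2 * q + 2) (\<lambda>n. \<Sum>m. e m n)"
    unfolding ordg_def e_def
  proof (intro allI impI)
    fix n :: nat assume n: "n < 2 * q + 2"
    have "D m n = 0" for m using ordg_cad_pow[OF o, of m] n by (simp add: ordg_def D_def)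
    then show "(\<Sum>m. cm m *\<^sub>R D m n) = 0" by simp
  qed
  moreover have "Nr r (\<lambda>n. \<Sum>m. e m n) \<le> Kc * (2 * r * Nr r a ^ 2)"
  proof -
    have "Nr r (\<lambda>n. \<Sum>m. e m n) \<le> (\<Sum>m. Nr r (e m))" using S by simp
    also have "\<dots> \<le> (\<Sum>m. \<bar>cm m\<bar> * C)" by (rule suminf_le[OF NEle sE summable_mult2[OF summable_cm]])
    also have "\<dots> = Kc * C" unfolding Kc_def by (rule suminf_mult2[OF summable_cm, symmetric])
    finally show ?thesis by (simp add: C_def power2_eq_square mult.assoc)
  qed
  ultimately show ?thesis using S by blast
qed


fun absA :: "(real \<Rightarrow> 'a::{real_normed_algebra_1,banach}) \<Rightarrow> nat \<Rightarrow> real \<Rightarrow> 'a" where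
  "absA B 0 t = B t"
| "absA B (Suc j) t = (\<Sum>m. cm m *\<^sub>R (adb (oint (absA B j) t) ^^ Suc m) (absA B j t))"

definition UFa :: "(real \<Rightarrow> 'a::{real_normed_algebra_1,banach}) \<Rightarrow> nat \<Rightarrow> real \<Rightarrow> 'a" where
  "UFa B k t = foldr (\<lambda>j P. exp (oint (absA B j) t) * P) [0..<k] 1"

fun Vs :: "(real \<Rightarrow> 'a::{real_normed_algebra_1,banach}) \<Rightarrow> (real \<Rightarrow> 'a) \<Rightarrow> nat \<Rightarrow> real \<Rightarrow> 'a" where
  "Vs B U 0 t = U t"
| "Vs B U (Suc j) t = exp (- oint (absA B j) t) * Vs B U j t"

lemma foldr_mult_out:
  fixes E :: "nat \<Rightarrow> 'a::monoid_mult"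
  shows "foldr (\<lambda>j P. E j * P) xs Q = foldr (\<lambda>j P. E j * P) xs 1 * Q"
  by (induction xs) (simp_all add: mult.assoc)

lemma UFa_Suc: "UFa B (Suc j) t = UFa B j t * exp (oint (absA B j) t)"
  unfolding UFa_def by (simp add: foldr_mult_out[of _ _ "exp (oint (absA B j) t)"])

lemma UFa_0: "UFa B 0 t = 1"
  by (simp add: UFa_def)

lemma boot:
  fixes V A :: "real \<Rightarrow> 'a::{real_normed_algebra_1,banach}"
  assumes T: "0 \<le> T"
    and D: "\<And>s. \<bar>s\<bar> \<le> T \<Longrightarrow> (V has_vector_derivative A s * V s) (at s)"
    and V0: "V 0 = 1"
    and AM: "\<And>s. \<bar>s\<bar> \<le> T \<Longrightarrow> norm (A s) \<le> M"
    and MT: "M * T \<le> 1 / 2"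
    and s: "\<bar>s\<bar> \<le> T"
  shows "norm (V s - 1) \<le> 2 * M * \<bar>s\<bar>"
proof -
  define I where "I = {-T..T}"
  have inI: "x \<in> I \<longleftrightarrow> \<bar>x\<bar> \<le> T" for x by (auto simp: I_def)
  have "norm (A 0) \<le> M" using AM[of 0] T by simp
  then have M0: "0 \<le> M" using norm_ge_zero[of "A 0"] by linarith
  have cont: "continuous_on I (\<lambda>x. norm (V x))"
  proof -
    have "continuous (at x) V" if "x \<in> I" for x
      using D[of x] that has_vector_derivative_continuous inI by blast
    then have "continuous_on I V" by (simp add: continuous_at_imp_continuous_on)
    then show ?thesis by (intro continuous_intros)
  qed
  obtain s0 where s0: "s0 \<in> I" and smax: "\<And>x. x \<in> I \<Longrightarrow> norm (V x) \<le> norm (V s0)"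
    using continuous_attains_sup[OF _ _ cont] T unfolding I_def by (metis atLeastAtMost_iff compact_Icc empty_iff neg_le_0_iff_le order.trans)
  define S where "S = norm (V s0)"
  have mvt: "norm (V x - V 0) \<le> (M * S) * norm (x - 0)" if x: "x \<in> I" for x
  proof (rule differentiable_bound[where S=I and f'="\<lambda>x h. h *\<^sub>R (A x * V x)"])
    show "convex I" by (simp add: I_def)
    show "x \<in> I" by (rule x)
    show "0 \<in> I" using T by (simp add: inI)
    fix y assume y: "y \<in> I"
    show "(V has_derivative (\<lambda>h. h *\<^sub>R (A y * V y))) (at y within I)"
      using D[of y] y inI unfolding has_vector_derivative_def by (auto intro: has_derivative_at_withinI)
    show "onorm (\<lambda>h. h *\<^sub>R (A y * V y)) \<le> M * S"
    proof (rule onorm_bound)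
      show "0 \<le> M * S" using M0 by (simp add: S_def)
      fix h :: real
      have "norm (A y * V y) \<le> norm (A y) * norm (V y)" by (rule norm_mult_ineq)
      also have "\<dots> \<le> M * S" using AM[of y] smax[OF y] y inI M0 unfolding S_def
        by (intro mult_mono) auto
      finally show "norm (h *\<^sub>R (A y * V y)) \<le> M * S * norm h"
        by (simp add: mult.commute mult_left_mono)
    qed
  qed
  have S2: "S \<le> 2"
  proof -
    have "S \<le> norm (V s0 - V 0) + norm (V 0)" unfolding S_def using norm_triangle_ineq[of "V s0 - V 0" "V 0"] by simp
    also have "\<dots> \<le> M * S * \<bar>s0\<bar> + 1" using mvt[OF s0] V0 by simp
    also have "M * S * \<bar>s0\<bar> \<le> M * S * T"
      using s0 inI M0 by (intro mult_left_mono) (auto simp: S_def)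
    also have "M * S * T = S * (M * T)" by simp
    also have "\<dots> \<le> S * (1/2)" by (rule mult_left_mono[OF MT]) (simp add: S_def)
    finally show ?thesis by simp
  qed
  have "norm (V s - 1) \<le> M * S * \<bar>s\<bar>" using mvt[of s] s inI V0 by simp
  also have "\<dots> \<le> M * 2 * \<bar>s\<bar>" using S2 M0 by (intro mult_right_mono mult_left_mono) auto
  finally show ?thesis by (simp add: mult.commute)
qed


lemma pow_le_self:
  fixes x :: real
  assumes "0 \<le> x" "x \<le> 1" "1 \<le> p"
  shows "x ^ p \<le> x"
  using power_decreasing[OF assms(3) assms(1,2)] by simp

lemma claim:
  fixes A0 :: "real \<Rightarrow> 'a::{real_normed_algebra_1,banach}" and U :: "real \<Rightarrow> real \<Rightarrow> 'a"
    and c :: "nat \<Rightarrow> 'a"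
  assumes r: "0 < r" and PA: "PS r c A0"
    and U0: "\<And>\<alpha>. U \<alpha> 0 = 1"
    and Ud: "\<And>\<alpha> t. (U \<alpha> has_vector_derivative (\<alpha> *\<^sub>R A0 t) * U \<alpha> t) (at t)"
  shows "\<exists>\<delta> K L. 0 < \<delta> \<and> \<delta> \<le> 1 \<and> 0 \<le> K \<and> 0 \<le> L \<and> (\<forall>\<alpha>. \<bar>\<alpha>\<bar> < \<delta> \<longrightarrow>
    (\<exists>a. PS r a (absA (\<lambda>t. \<alpha> *\<^sub>R A0 t) j) \<and> ordg (2 ^ (j + 1) - 2) a \<and> Nr r a \<le> K * \<bar>\<alpha>\<bar> ^ (2 ^ j))
    \<and> (\<forall>t. \<bar>t\<bar> < r \<longrightarrow> norm (UFa (\<lambda>t. \<alpha> *\<^sub>R A0 t) j t) \<le> L)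
    \<and> (\<forall>t. U \<alpha> t = UFa (\<lambda>t. \<alpha> *\<^sub>R A0 t) j t * Vs (\<lambda>t. \<alpha> *\<^sub>R A0 t) (U \<alpha>) j t)
    \<and> (\<forall>t. \<bar>t\<bar> < r \<longrightarrow> (Vs (\<lambda>t. \<alpha> *\<^sub>R A0 t) (U \<alpha>) j has_vector_derivative
             absA (\<lambda>t. \<alpha> *\<^sub>R A0 t) j t * Vs (\<lambda>t. \<alpha> *\<^sub>R A0 t) (U \<alpha>) j t) (at t)))"
proof (induction j)
  case 0
  have K0: "0 \<le> Nr r c" by (rule Nr_nonneg[OF _ PA]) (use r in simp)
  show ?case
  proof (rule exI[of _ 1], rule exI[of _ "Nr r c"], rule exI[of _ 1], intro conjI allI impI K0)
    fix \<alpha> :: real assume "\<bar>\<alpha>\<bar> < 1"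
    have e: "absA (\<lambda>t. \<alpha> *\<^sub>R A0 t) 0 = (\<lambda>t. \<alpha> *\<^sub>R A0 t)" by (rule ext) simp
    show "\<exists>a. PS r a (absA (\<lambda>t. \<alpha> *\<^sub>R A0 t) 0) \<and> ordg (2 ^ (0 + 1) - 2) a \<and> Nr r a \<le> Nr r c * \<bar>\<alpha>\<bar> ^ 2 ^ 0"
      using PS_scaleR[OF PA, of \<alpha>] unfolding e by (intro exI[of _ "\<lambda>n. \<alpha> *\<^sub>R c n"]) (simp add: ordg_def mult.commute)
    show "norm (UFa (\<lambda>t. \<alpha> *\<^sub>R A0 t) 0 t) \<le> 1" for t by (simp add: UFa_0)
    show "U \<alpha> t = UFa (\<lambda>t. \<alpha> *\<^sub>R A0 t) 0 t * Vs (\<lambda>t. \<alpha> *\<^sub>R A0 t) (U \<alpha>) 0 t" for t by (simp add: UFa_0)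
    show "(Vs (\<lambda>t. \<alpha> *\<^sub>R A0 t) (U \<alpha>) 0 has_vector_derivative
             absA (\<lambda>t. \<alpha> *\<^sub>R A0 t) 0 t * Vs (\<lambda>t. \<alpha> *\<^sub>R A0 t) (U \<alpha>) 0 t) (at t)" for t
    proof -
      have "Vs (\<lambda>t. \<alpha> *\<^sub>R A0 t) (U \<alpha>) 0 = U \<alpha>" by (rule ext) simp
      then show ?thesis
        using Ud[of \<alpha> t] by simp
    qed
  qed simp_all
next
  case (Suc j)
  then obtain \<delta> K L where d: "0 < \<delta>" "\<delta> \<le> 1" and K: "0 \<le> K" and L: "0 \<le> L"
    and H: "\<And>\<alpha>. \<bar>\<alpha>\<bar> < \<delta> \<Longrightarrow>
    (\<exists>a. PS r a (absA (\<lambda>t. \<alpha> *\<^sub>R A0 t) j) \<and> ordg (2 ^ (j + 1) - 2) a \<and> Nr r a \<le> K * \<bar>\<alpha>\<bar> ^ (2 ^ j))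
    \<and> (\<forall>t. \<bar>t\<bar> < r \<longrightarrow> norm (UFa (\<lambda>t. \<alpha> *\<^sub>R A0 t) j t) \<le> L)
    \<and> (\<forall>t. U \<alpha> t = UFa (\<lambda>t. \<alpha> *\<^sub>R A0 t) j t * Vs (\<lambda>t. \<alpha> *\<^sub>R A0 t) (U \<alpha>) j t)
    \<and> (\<forall>t. \<bar>t\<bar> < r \<longrightarrow> (Vs (\<lambda>t. \<alpha> *\<^sub>R A0 t) (U \<alpha>) j has_vector_derivative
             absA (\<lambda>t. \<alpha> *\<^sub>R A0 t) j t * Vs (\<lambda>t. \<alpha> *\<^sub>R A0 t) (U \<alpha>) j t) (at t))"
    by blast
  define \<delta>' where "\<delta>' = min \<delta> (1 / (2 * r * K + 1))"
  have rk0: "0 \<le> 2 * r * K" using r K by simp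
  then have rk: "0 < 2 * r * K + 1" by linarith
  have d': "0 < \<delta>'" "\<delta>' \<le> 1" using d rk by (auto simp: \<delta>'_def)
  have K': "0 \<le> Kc * (2 * r * K ^ 2)" using Kc_nonneg r K by simp
  have L': "0 \<le> L * exp (r * K)" using L by simp
  show ?case
  proof (rule exI[of _ \<delta>'], rule exI[of _ "Kc * (2 * r * K ^ 2)"], rule exI[of _ "L * exp (r * K)"], intro conjI allI impI d' K' L')
    fix \<alpha> :: real assume \<alpha>: "\<bar>\<alpha>\<bar> < \<delta>'"
    define B where "B = (\<lambda>t. \<alpha> *\<^sub>R A0 t)"
    have \<alpha>d: "\<bar>\<alpha>\<bar> < \<delta>" using \<alpha> by (simp add: \<delta>'_def)
    have \<alpha>1: "\<bar>\<alpha>\<bar> \<le> 1" using \<alpha> d' by simp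
    have \<alpha>K: "\<bar>\<alpha>\<bar> \<le> 1 / (2 * r * K + 1)" using \<alpha> by (simp add: \<delta>'_def)
    note HH = H[OF \<alpha>d, folded B_def]
    obtain a where Pa: "PS r a (absA B j)" and oa: "ordg (2 ^ (j + 1) - 2) a" and Na: "Nr r a \<le> K * \<bar>\<alpha>\<bar> ^ (2 ^ j)"
      using HH by blast
    have UF: "\<And>t. \<bar>t\<bar> < r \<Longrightarrow> norm (UFa B j t) \<le> L" using HH by blast
    have UV: "\<And>t. U \<alpha> t = UFa B j t * Vs B (U \<alpha>) j t" using HH by blast
    have VD: "\<And>t. \<bar>t\<bar> < r \<Longrightarrow> (Vs B (U \<alpha>) j has_vector_derivative absA B j t * Vs B (U \<alpha>) j t) (at t)"
      using HH by blast
    have na: "0 \<le> Nr r a" by (rule Nr_nonneg[OF _ Pa]) (use r in simp)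
    have p1: "\<bar>\<alpha>\<bar> ^ (2 ^ j) \<le> \<bar>\<alpha>\<bar>" by (rule pow_le_self) (use \<alpha>1 in auto)
    have p2: "\<bar>\<alpha>\<bar> ^ (2 ^ j) \<le> 1" using p1 \<alpha>1 by linarith
    have NaK: "Nr r a \<le> K" using Na p2 K by (meson mult_left_le order_trans zero_le_power abs_ge_zero)
    have small: "2 * r * Nr r a \<le> 1"
    proof -
      have "2 * r * Nr r a \<le> 2 * r * (K * \<bar>\<alpha>\<bar>)"
        using Na p1 K r by (intro mult_left_mono) (auto intro: order_trans mult_left_mono)
      also have "\<dots> = (2 * r * K) * \<bar>\<alpha>\<bar>" by simp
      also have "\<dots> \<le> (2 * r * K) * (1 / (2 * r * K + 1))" using \<alpha>K r K by (intro mult_left_mono) auto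
      also have "\<dots> \<le> 1" using rk by (simp add: field_simps)
      finally show ?thesis .
    qed
    obtain b where Pb: "PS r b (\<lambda>t. \<Sum>m. cm m *\<^sub>R (adb (oint (absA B j) t) ^^ Suc m) (absA B j t))"
      and ob: "ordg (2 * (2 ^ (j + 1) - 2) + 2) b" and Nb: "Nr r b \<le> Kc * (2 * r * Nr r a ^ 2)"
      using PS_step[OF r Pa oa small] by blast
    have eA: "(\<lambda>t. \<Sum>m. cm m *\<^sub>R (adb (oint (absA B j) t) ^^ Suc m) (absA B j t)) = absA B (Suc j)"
      by (rule ext) simp
    have eo: "2 * (2 ^ (j + 1) - 2) + 2 = 2 ^ (Suc j + 1) - (2::nat)"
    proof -
      define x where "x = (2::nat) ^ (j + 1)"
      have x2: "2 \<le> x" unfolding x_def by (simp add: self_le_power)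
      have "2 ^ (Suc j + 1) = 2 * x" unfolding x_def by simp
      moreover have "2 * (x - 2) + 2 = 2 * x - 2" using x2 by arith
      ultimately show ?thesis unfolding x_def by simp
    qed
    show "\<exists>a. PS r a (absA B (Suc j)) \<and> ordg (2 ^ (Suc j + 1) - 2) a \<and> Nr r a \<le> Kc * (2 * r * K ^ 2) * \<bar>\<alpha>\<bar> ^ 2 ^ Suc j"
    proof (intro exI[of _ b] conjI)
      show "PS r b (absA B (Suc j))" using Pb unfolding eA .
      show "ordg (2 ^ (Suc j + 1) - 2) b" using ob unfolding eo .
      have "Nr r a ^ 2 \<le> (K * \<bar>\<alpha>\<bar> ^ (2 ^ j)) ^ 2" by (rule power_mono[OF Na na])
      then have "Kc * (2 * r * Nr r a ^ 2) \<le> Kc * (2 * r * (K * \<bar>\<alpha>\<bar> ^ (2 ^ j)) ^ 2)"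
        using Kc_nonneg r by (intro mult_left_mono) auto
      also have "\<dots> = Kc * (2 * r * K ^ 2) * \<bar>\<alpha>\<bar> ^ 2 ^ Suc j"
        by (simp add: power_mult_distrib power_mult[symmetric] mult.commute)
      finally show "Nr r b \<le> Kc * (2 * r * K ^ 2) * \<bar>\<alpha>\<bar> ^ 2 ^ Suc j" using Nb by linarith
    qed
    note I = PS_integ[OF r Pa]
    have PI: "PS r (integ a) (oint (absA B j))" using I by simp
    have FD: "\<And>t. \<bar>t\<bar> < r \<Longrightarrow> (oint (absA B j) has_vector_derivative absA B j t) (at t)" using I by simp
    show "norm (UFa B (Suc j) t) \<le> L * exp (r * K)" if t: "\<bar>t\<bar> < r" for t
    proof -
      have nF: "norm (oint (absA B j) t) \<le> r * K"
      proof -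
        have "norm (oint (absA B j) t) \<le> (\<bar>t\<bar> / r) ^ 0 * Nr r (integ a)"
          by (rule PS_bound[OF r PI _ t]) (simp add: ordg_def)
        also have "\<dots> \<le> r * Nr r a" using I by simp
        also have "\<dots> \<le> r * K" using NaK r by simp
        finally show ?thesis .
      qed
      have "norm (UFa B (Suc j) t) \<le> norm (UFa B j t) * norm (exp (oint (absA B j) t))"
        unfolding UFa_Suc by (rule norm_mult_ineq)
      also have "\<dots> \<le> L * exp (r * K)"
      proof (rule mult_mono)
        show "norm (UFa B j t) \<le> L" by (rule UF[OF t])
        have "norm (exp (oint (absA B j) t)) \<le> exp (norm (oint (absA B j) t))" by (rule norm_exp)
        also have "\<dots> \<le> exp (r * K)" using nF by simp
        finally show "norm (exp (oint (absA B j) t)) \<le> exp (r * K)" .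
      qed (use L in auto)
      finally show ?thesis .
    qed
    show "U \<alpha> t = UFa B (Suc j) t * Vs B (U \<alpha>) (Suc j) t" for t
    proof -
      have "U \<alpha> t = UFa B j t * (exp (oint (absA B j) t) * exp (- oint (absA B j) t)) * Vs B (U \<alpha>) j t"
        using UV[of t] by (simp add: exp_minus_inverse)
      then show ?thesis
        by (simp add: UFa_Suc mult.assoc)
    qed
    show "(Vs B (U \<alpha>) (Suc j) has_vector_derivative absA B (Suc j) t * Vs B (U \<alpha>) (Suc j) t) (at t)" if t: "\<bar>t\<bar> < r" for t
    proof -
      have "((\<lambda>s. exp (- oint (absA B j) s) * Vs B (U \<alpha>) j s) has_vector_derivative
           (\<Sum>m. cm m *\<^sub>R (adb (oint (absA B j) t) ^^ Suc m) (absA B j t)) * (exp (- oint (absA B j) t) * Vs B (U \<alpha>) j t)) (at t)"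
        by (rule V_step[where A="absA B j", OF FD[OF t] VD[OF t]])
      moreover have "(\<lambda>s. exp (- oint (absA B j) s) * Vs B (U \<alpha>) j s) = Vs B (U \<alpha>) (Suc j)"
        by (rule ext) simp
      ultimately show ?thesis
        by simp
    qed
  qed
qed


lemma oint_zero: "oint f 0 = 0"
  by (simp add: oint_def)

lemma Vs_zero: "U 0 = 1 \<Longrightarrow> Vs B U j 0 = 1"
  by (induction j) (simp_all add: oint_zero)

theorem abstract_main:
  fixes A0 :: "real \<Rightarrow> 'a::{real_normed_algebra_1,banach}" and U :: "real \<Rightarrow> real \<Rightarrow> 'a"
    and c :: "nat \<Rightarrow> 'a"
  assumes r: "0 < r" and PA: "PS r c A0"
    and U0: "\<And>\<alpha>. U \<alpha> 0 = 1"
    and Ud: "\<And>\<alpha> t. (U \<alpha> has_vector_derivative (\<alpha> *\<^sub>R A0 t) * U \<alpha> t) (at t)"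
  shows "\<exists>C \<delta>. \<delta> > 0 \<and> (\<forall>\<alpha> t. \<bar>\<alpha>\<bar> < \<delta> \<and> \<bar>t\<bar> < \<delta> \<longrightarrow>
           norm (UFa (\<lambda>t. \<alpha> *\<^sub>R A0 t) k t - U \<alpha> t) \<le> C * \<bar>\<alpha>\<bar> ^ (2 ^ k) * \<bar>t\<bar> ^ (2 ^ (k + 1) - 1))"
proof -
  obtain \<delta> K L where d: "0 < \<delta>" "\<delta> \<le> 1" and K: "0 \<le> K" and L: "0 \<le> L"
    and H: "\<And>\<alpha>. \<bar>\<alpha>\<bar> < \<delta> \<Longrightarrow>
    (\<exists>a. PS r a (absA (\<lambda>t. \<alpha> *\<^sub>R A0 t) k) \<and> ordg (2 ^ (k + 1) - 2) a \<and> Nr r a \<le> K * \<bar>\<alpha>\<bar> ^ (2 ^ k))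
    \<and> (\<forall>t. \<bar>t\<bar> < r \<longrightarrow> norm (UFa (\<lambda>t. \<alpha> *\<^sub>R A0 t) k t) \<le> L)
    \<and> (\<forall>t. U \<alpha> t = UFa (\<lambda>t. \<alpha> *\<^sub>R A0 t) k t * Vs (\<lambda>t. \<alpha> *\<^sub>R A0 t) (U \<alpha>) k t)
    \<and> (\<forall>t. \<bar>t\<bar> < r \<longrightarrow> (Vs (\<lambda>t. \<alpha> *\<^sub>R A0 t) (U \<alpha>) k has_vector_derivative
             absA (\<lambda>t. \<alpha> *\<^sub>R A0 t) k t * Vs (\<lambda>t. \<alpha> *\<^sub>R A0 t) (U \<alpha>) k t) (at t))"
    using claim[OF r PA U0 Ud, of k] by blast
  define q :: nat where "q = 2 ^ (k + 1) - 2"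
  define p :: nat where "p = 2 ^ k"
  have q1: "q + 1 = 2 ^ (k + 1) - 1"
  proof -
    have "(2::nat) \<le> 2 ^ (k + 1)" by (simp add: self_le_power)
    then show ?thesis unfolding q_def by arith
  qed
  define \<delta>f where "\<delta>f = min \<delta> (min r (1 / (2 * K + 1)))"
  define C where "C = 2 * L * K / r ^ q"
  have df: "0 < \<delta>f" using d r K by (simp add: \<delta>f_def)
  show ?thesis
  proof (rule exI[of _ C], rule exI[of _ \<delta>f], intro conjI allI impI df, elim conjE)
    fix \<alpha> t :: real assume \<alpha>: "\<bar>\<alpha>\<bar> < \<delta>f" and t: "\<bar>t\<bar> < \<delta>f"
    define B where "B = (\<lambda>t. \<alpha> *\<^sub>R A0 t)"
    define V where "V = Vs B (U \<alpha>) k"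
    define A where "A = absA B k"
    have \<alpha>d: "\<bar>\<alpha>\<bar> < \<delta>" using \<alpha> by (simp add: \<delta>f_def)
    have \<alpha>1: "\<bar>\<alpha>\<bar> \<le> 1" using \<alpha>d d by simp
    have tr: "\<bar>t\<bar> < r" using t by (simp add: \<delta>f_def)
    have tK: "\<bar>t\<bar> \<le> 1 / (2 * K + 1)" using t by (simp add: \<delta>f_def)
    note HH = H[OF \<alpha>d, folded B_def]
    obtain a where Pa: "PS r a A" and oa: "ordg q a" and Na: "Nr r a \<le> K * \<bar>\<alpha>\<bar> ^ p"
      using HH unfolding A_def q_def p_def by blast
    have UF: "norm (UFa B k t) \<le> L" using HH tr by blast
    have UV: "U \<alpha> t = UFa B k t * V t" using HH unfolding V_def by blast
    have VD: "\<And>s. \<bar>s\<bar> < r \<Longrightarrow> (V has_vector_derivative A s * V s) (at s)"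
      using HH unfolding V_def A_def by blast
    have V0: "V 0 = 1" unfolding V_def by (rule Vs_zero[where U="U \<alpha>", OF U0[of \<alpha>]])
    have na: "0 \<le> Nr r a" by (rule Nr_nonneg[OF _ Pa]) (use r in simp)
    have ap: "\<bar>\<alpha>\<bar> ^ p \<le> 1" using \<alpha>1 by (simp add: power_le_one)
    define M where "M = (\<bar>t\<bar> / r) ^ q * (K * \<bar>\<alpha>\<bar> ^ p)"
    have M0: "0 \<le> M" unfolding M_def using K r by simp
    have AM: "norm (A s) \<le> M" if s: "\<bar>s\<bar> \<le> \<bar>t\<bar>" for s
    proof -
      have sr: "\<bar>s\<bar> < r" using s tr by linarith
      have "norm (A s) \<le> (\<bar>s\<bar> / r) ^ q * Nr r a" by (rule PS_bound[OF r Pa oa sr])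
      also have "\<dots> \<le> (\<bar>t\<bar> / r) ^ q * (K * \<bar>\<alpha>\<bar> ^ p)"
      proof (rule mult_mono)
        show "(\<bar>s\<bar> / r) ^ q \<le> (\<bar>t\<bar> / r) ^ q"
          by (rule power_mono) (use s r in \<open>auto simp: divide_right_mono\<close>)
      qed (use Na na r in auto)
      finally show ?thesis unfolding M_def .
    qed
    have MK: "M \<le> K"
    proof -
      have "(\<bar>t\<bar> / r) ^ q \<le> 1" using tr r by (intro power_le_one) auto
      moreover have "K * \<bar>\<alpha>\<bar> ^ p \<le> K" using ap K by (simp add: mult_left_le)
      ultimately show ?thesis unfolding M_def using K
        by (meson mult_le_one order_trans mult_right_mono zero_le_power abs_ge_zero zero_le_mult_iff mult_left_le_one_le divide_nonneg_nonneg less_imp_le r)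
    qed
    have MT: "M * \<bar>t\<bar> \<le> 1 / 2"
    proof -
      have "M * \<bar>t\<bar> \<le> K * (1 / (2 * K + 1))" using MK tK M0 K by (intro mult_mono) auto
      also have "\<dots> \<le> 1 / 2" using K by (simp add: field_simps)
      finally show ?thesis .
    qed
    have bt: "norm (V t - 1) \<le> 2 * M * \<bar>t\<bar>"
      by (rule boot[where A=A and T="\<bar>t\<bar>"]) (use VD V0 AM MT tr in auto)
    have "norm (UFa B k t - U \<alpha> t) = norm (UFa B k t * (1 - V t))"
      unfolding UV by (simp add: algebra_simps)
    also have "\<dots> \<le> norm (UFa B k t) * norm (1 - V t)" by (rule norm_mult_ineq)
    also have "\<dots> \<le> L * (2 * M * \<bar>t\<bar>)"
      using UF bt L by (intro mult_mono) (auto simp: norm_minus_commute)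
    also have "\<dots> = C * \<bar>\<alpha>\<bar> ^ (2 ^ k) * \<bar>t\<bar> ^ (2 ^ (k + 1) - 1)"
      unfolding M_def C_def q1[symmetric] p_def using r
      by (simp add: power_divide field_simps)
    finally show "norm (UFa (\<lambda>t. \<alpha> *\<^sub>R A0 t) k t - U \<alpha> t) \<le> C * \<bar>\<alpha>\<bar> ^ (2 ^ k) * \<bar>t\<bar> ^ (2 ^ (k + 1) - 1)"
      unfolding B_def .
  qed
qed


typedef (overloaded) ('n::finite) bop = "UNIV :: ((complex^'n) \<Rightarrow>\<^sub>L (complex^'n)) set"
  morphisms Rep_bop Abs_bop by simp

setup_lifting type_definition_bop

instantiation bop :: (finite) real_normed_vector
begin
lift_definition zero_bop :: "'a bop" is "0" .
lift_definition plus_bop :: "'a bop \<Rightarrow> 'a bop \<Rightarrow> 'a bop" is "(+)" .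
lift_definition minus_bop :: "'a bop \<Rightarrow> 'a bop \<Rightarrow> 'a bop" is "(-)" .
lift_definition uminus_bop :: "'a bop \<Rightarrow> 'a bop" is "uminus" .
lift_definition scaleR_bop :: "real \<Rightarrow> 'a bop \<Rightarrow> 'a bop" is "scaleR" .
lift_definition norm_bop :: "'a bop \<Rightarrow> real" is "norm" .
definition dist_bop :: "'a bop \<Rightarrow> 'a bop \<Rightarrow> real" where "dist_bop a b = norm (a - b)"
definition sgn_bop :: "'a bop \<Rightarrow> 'a bop" where "sgn_bop x = scaleR (inverse (norm x)) x"
definition uniformity_bop :: "('a bop \<times> 'a bop) filter" where
  "uniformity_bop = (INF e\<in>{0 <..}. principal {(x, y). dist x y < e})"
definition open_bop :: "'a bop set \<Rightarrow> bool" where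
  "open_bop S = (\<forall>x\<in>S. \<forall>\<^sub>F (x', y) in uniformity. x' = x \<longrightarrow> y \<in> S)"
instance
proof
  fix a b c :: "'a bop" and r s :: real
  show "a + b + c = a + (b + c)" by transfer (rule add.assoc)
  show "a + b = b + a" by transfer (rule add.commute)
  show "0 + a = a" by transfer simp
  show "- a + a = 0" by transfer simp
  show "a - b = a + - b" by transfer simp
  show "r *\<^sub>R (a + b) = r *\<^sub>R a + r *\<^sub>R b" by transfer (rule scaleR_add_right)
  show "(r + s) *\<^sub>R a = r *\<^sub>R a + s *\<^sub>R a" by transfer (rule scaleR_add_left)
  show "r *\<^sub>R s *\<^sub>R a = (r * s) *\<^sub>R a" by transfer simp
  show "1 *\<^sub>R a = a" by transfer simp
  show "dist a b = norm (a - b)" by (simp add: dist_bop_def)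
  show "sgn a = inverse (norm a) *\<^sub>R a" by (simp add: sgn_bop_def)
  show "(norm a = 0) = (a = 0)" by transfer simp
  show "norm (a + b) \<le> norm a + norm b" by transfer (rule norm_triangle_ineq)
  show "norm (r *\<^sub>R a) = \<bar>r\<bar> * norm a" by transfer simp
next
  show "(uniformity :: ('a bop \<times> 'a bop) filter) = (INF e\<in>{0 <..}. principal {(x, y). dist x y < e})"
    by (simp add: uniformity_bop_def)
next
  fix U :: "'a bop set"
  show "open U = (\<forall>x\<in>U. \<forall>\<^sub>F (x', y) in uniformity. x' = x \<longrightarrow> y \<in> U)"
    by (simp add: open_bop_def)
qed
end

instantiation bop :: (finite) real_normed_algebra_1
begin
lift_definition times_bop :: "'a bop \<Rightarrow> 'a bop \<Rightarrow> 'a bop" is "blinfun_compose" .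
lift_definition one_bop :: "'a bop" is "id_blinfun" .
instance
proof
  fix a b c :: "'a bop" and r :: real
  show "a * b * c = a * (b * c)" by transfer (rule blinfun_eqI, simp)
  show "(a + b) * c = a * c + b * c" by transfer (rule blinfun_eqI, simp add: blinfun.bilinear_simps)
  show "a * (b + c) = a * b + a * c" by transfer (rule blinfun_eqI, simp add: blinfun.bilinear_simps)
  show "1 * a = a" by transfer (rule blinfun_eqI, simp)
  show "a * 1 = a" by transfer (rule blinfun_eqI, simp)
  show "r *\<^sub>R a * b = r *\<^sub>R (a * b)" by transfer (rule blinfun_eqI, simp add: blinfun.bilinear_simps)
  show "a * r *\<^sub>R b = r *\<^sub>R (a * b)" by transfer (rule blinfun_eqI, simp add: blinfun.bilinear_simps)
  show "norm (a * b) \<le> norm a * norm b" by transfer (rule norm_blinfun_compose)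
  show "norm (1 :: 'a bop) = 1" by transfer (rule norm_blinfun_id)
  show "(0 :: 'a bop) \<noteq> 1"
  proof
    assume "(0 :: 'a bop) = 1"
    then have "norm (0 :: 'a bop) = norm (1 :: 'a bop)" by simp
    moreover have "norm (1 :: 'a bop) = 1" by transfer (rule norm_blinfun_id)
    ultimately show False by simp
  qed
qed
end

lemma norm_bop_diff: "norm (a - b) = norm (Rep_bop a - Rep_bop b)"
  by transfer simp

instance bop :: (finite) banach
proof
  fix X :: "nat \<Rightarrow> 'a bop"
  assume "Cauchy X"
  then have "Cauchy (\<lambda>n. Rep_bop (X n))"
    unfolding Cauchy_iff by (simp add: norm_bop_diff)
  then obtain L where L: "(\<lambda>n. Rep_bop (X n)) \<longlonglongrightarrow> L"
    using convergent_def Cauchy_convergent_iff by blast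
  have "X \<longlonglongrightarrow> Abs_bop L"
    using L unfolding LIMSEQ_iff by (simp add: norm_bop_diff Abs_bop_inverse)
  then show "convergent X" by (rule convergentI)
qed


lemma bl_mv: "bounded_linear (\<lambda>x::complex^'n. M *v x)"
proof -
  have "linear (\<lambda>x::complex^'n. M *v x)"
  proof (rule linearI)
    fix x y :: "complex^'n" show "M *v (x + y) = M *v x + M *v y" by (rule matrix_vector_right_distrib)
  next
    fix c :: real and x :: "complex^'n"
    show "M *v (c *\<^sub>R x) = c *\<^sub>R (M *v x)"
      by (simp add: vec_eq_iff matrix_vector_mult_def scaleR_sum_right)
  qed
  then show ?thesis by (simp add: linear_conv_bounded_linear)
qed

definition Phi :: "complex^'n^'n \<Rightarrow> 'n::finite bop" where
  "Phi M = Abs_bop (Blinfun (\<lambda>x. M *v x))"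

lemma Rep_Phi: "blinfun_apply (Rep_bop (Phi M)) = (\<lambda>x. M *v x)"
  by (simp add: Phi_def Abs_bop_inverse bounded_linear_Blinfun_apply bl_mv)

lemma bop_eqI: "(\<And>x. blinfun_apply (Rep_bop a) x = blinfun_apply (Rep_bop b) x) \<Longrightarrow> a = b"
  by (metis Rep_bop_inject blinfun_eqI)

lemma Phi_add: "Phi (M + N) = Phi M + Phi N"
  by (rule bop_eqI) (simp add: Rep_Phi plus_bop.rep_eq blinfun.add_left matrix_vector_mult_add_rdistrib)

lemma Phi_scaleR: "Phi (c *\<^sub>R M) = c *\<^sub>R Phi M"
  by (rule bop_eqI) (simp add: Rep_Phi scaleR_bop.rep_eq blinfun.scaleR_left vec_eq_iff matrix_vector_mult_def scaleR_sum_right)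

lemma Phi_mult: "Phi (M ** N) = Phi M * Phi N"
  by (rule bop_eqI) (simp add: Rep_Phi times_bop.rep_eq matrix_vector_mul_assoc)

lemma Phi_one: "Phi (mat 1) = 1"
  by (rule bop_eqI) (simp add: Rep_Phi one_bop.rep_eq)

lemma linear_Phi: "linear Phi"
  by (rule linearI) (simp_all add: Phi_add Phi_scaleR)

lemma bl_Phi: "bounded_linear Phi"
  using linear_Phi by (simp add: linear_conv_bounded_linear)

lemma Phi_diff: "Phi (M - N) = Phi M - Phi N"
  by (rule linear_diff[OF linear_Phi])

lemma norm_Phi: "norm (Phi M) = opnorm M"
  by (simp add: norm_bop.rep_eq norm_blinfun.rep_eq Rep_Phi opnorm_def)

definition Psi :: "'n::finite bop \<Rightarrow> complex^'n^'n" where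
  "Psi L = (\<chi> i j. blinfun_apply (Rep_bop L) (axis j 1) $ i)"

lemma Psi_Phi: "Psi (Phi M) = M"
  by (simp add: Psi_def Rep_Phi vec_eq_iff matrix_vector_mult_def axis_def if_distrib sum.delta sum.delta' cong: if_cong)

lemma bl_Psi: "bounded_linear (Psi :: 'n::finite bop \<Rightarrow> _)"
proof (rule bounded_linear_intro[where K="real (CARD('n)) * real (CARD('n))"])
  fix a b :: "'n bop"
  show "Psi (a + b) = Psi a + Psi b"
    by (simp add: Psi_def plus_bop.rep_eq vec_eq_iff blinfun.add_left)
next
  fix r :: real and a :: "'n bop"
  show "Psi (r *\<^sub>R a) = r *\<^sub>R Psi a"
    by (simp add: Psi_def scaleR_bop.rep_eq vec_eq_iff blinfun.scaleR_left)
next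
  fix L :: "'n bop"
  have row: "norm (Psi L $ i) \<le> real (CARD('n)) * norm L" for i
  proof -
    have "norm (Psi L $ i) \<le> (\<Sum>j\<in>UNIV. norm (Psi L $ i $ j))"
      unfolding norm_vec_def by (rule L2_set_le_sum) simp
    also have "\<dots> \<le> (\<Sum>j\<in>(UNIV::'n set). norm L)"
    proof (rule sum_mono)
      fix j
      have "Psi L $ i $ j = blinfun_apply (Rep_bop L) (axis j 1) $ i" by (simp add: Psi_def)
      then have "norm (Psi L $ i $ j) \<le> norm (blinfun_apply (Rep_bop L) (axis j 1))"
        using Finite_Cartesian_Product.norm_nth_le by metis
      also have "\<dots> \<le> norm (Rep_bop L) * norm (axis j (1::complex))" by (rule norm_blinfun)
      finally show "norm (Psi L $ i $ j) \<le> norm L" by (simp add: norm_bop.rep_eq norm_axis_1)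
    qed
    finally show ?thesis by simp
  qed
  have "norm (Psi L) \<le> (\<Sum>i\<in>UNIV. norm (Psi L $ i))"
    unfolding norm_vec_def by (rule L2_set_le_sum) simp
  also have "\<dots> \<le> (\<Sum>i\<in>(UNIV::'n set). real (CARD('n)) * norm L)" by (rule sum_mono[OF row])
  finally show "norm (Psi L) \<le> norm L * (real (CARD('n)) * real (CARD('n)))" by (simp add: algebra_simps)
qed


lemma Phi_summable: "summable (\<lambda>k. Phi (f k)) \<Longrightarrow> summable f"
  using bounded_linear.summable[OF bl_Psi, of "\<lambda>k. Phi (f k)"] by (simp add: Psi_Phi)

lemma Phi_suminf: "summable (\<lambda>k. Phi (f k)) \<Longrightarrow> Phi (suminf f) = (\<Sum>k. Phi (f k))"
  by (rule bounded_linear.suminf[OF bl_Phi Phi_summable])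

lemma Phi_zero: "Phi 0 = 0"
  by (rule linear_0[OF linear_Phi])

lemma Phi_uminus: "Phi (- M) = - Phi M"
  by (rule linear_neg[OF linear_Phi])

lemma Phi_integral: "Phi (integral S f) = integral S (\<lambda>x. Phi (f x))"
proof (cases "f integrable_on S")
  case True
  then show ?thesis using integral_linear[OF True bl_Phi] by (simp add: o_def)
next
  case False
  have "\<not> (\<lambda>x. Phi (f x)) integrable_on S"
  proof
    assume "(\<lambda>x. Phi (f x)) integrable_on S"
    from integrable_linear[OF this bl_Psi] have "f integrable_on S" by (simp add: o_def Psi_Phi)
    with False show False by simp
  qed
  then show ?thesis using False by (simp add: not_integrable_integral Phi_zero)
qed

lemma Phi_oint: "Phi (oint f t) = oint (\<lambda>s. Phi (f s)) t"
  by (simp add: oint_def Phi_integral Phi_uminus)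

lemma Phi_mpow: "Phi (mpow M k) = Phi M ^ k"
  by (induction k) (simp_all add: Phi_one Phi_mult)

lemma Phi_mexp: "Phi (mexp M) = exp (Phi M)"
proof -
  have e: "(\<lambda>k. Phi ((1 / fact k) *\<^sub>R mpow M k)) = (\<lambda>k. Phi M ^ k /\<^sub>R fact k)"
    by (simp add: Phi_scaleR Phi_mpow divide_inverse)
  have s: "summable (\<lambda>k. Phi ((1 / fact k) *\<^sub>R mpow M k))" unfolding e by (rule summable_exp_generic)
  show ?thesis unfolding mexp_def Phi_suminf[OF s] e exp_def ..
qed

lemma Phi_ad: "Phi (ad X Y) = adb (Phi X) (Phi Y)"
  by (simp add: ad_def adb_def Phi_diff Phi_mult)

lemma Phi_ad_pow: "Phi ((ad X ^^ k) Y) = (adb (Phi X) ^^ k) (Phi Y)"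
  by (induction k) (simp_all add: Phi_ad)

lemma summable_cm_series:
  fixes F A :: "'a::{real_normed_algebra_1,banach}"
  shows "summable (\<lambda>m. cm m *\<^sub>R (adb F ^^ Suc m) A)"
proof -
  have "summable (\<lambda>m. norm (cm m *\<^sub>R (adb F ^^ m) (adb F A)))"
    by (rule summable_norm_adb_series[OF cm_bound])
  then have s: "summable (\<lambda>m. cm m *\<^sub>R (adb F ^^ m) (adb F A))" by (rule summable_norm_cancel)
  have e: "(\<lambda>m. cm m *\<^sub>R (adb F ^^ Suc m) A) = (\<lambda>m. cm m *\<^sub>R (adb F ^^ m) (adb F A))"
    by (simp only: funpow_Suc_right o_apply)
  show ?thesis unfolding e by (rule s)
qed

lemma Phi_magA: "Phi (magA \<alpha> A0 j t) = absA (\<lambda>t. \<alpha> *\<^sub>R Phi (A0 t)) j t"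
proof (induction j arbitrary: t)
  case 0 then show ?case by (simp add: Phi_scaleR)
next
  case (Suc j)
  define B where "B = (\<lambda>t. \<alpha> *\<^sub>R Phi (A0 t))"
  have IH: "(\<lambda>s. Phi (magA \<alpha> A0 j s)) = absA B j" using Suc unfolding B_def by (simp add: fun_eq_iff)
  define g where "g m = cm m *\<^sub>R (ad (oint (magA \<alpha> A0 j) t) ^^ Suc m) (magA \<alpha> A0 j t)" for m
  have Pg: "Phi (g m) = cm m *\<^sub>R (adb (oint (absA B j) t) ^^ Suc m) (absA B j t)" for m
    unfolding g_def Phi_scaleR Phi_ad_pow Phi_oint IH using Suc unfolding B_def by simp
  have s: "summable (\<lambda>m. Phi (g m))" unfolding Pg by (rule summable_cm_series)
  have "magA \<alpha> A0 (Suc j) t = suminf g" unfolding g_def[abs_def] cm_def by (simp only: magA.simps)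
  then have "Phi (magA \<alpha> A0 (Suc j) t) = (\<Sum>m. Phi (g m))" using Phi_suminf[OF s] by simp
  also have "\<dots> = absA B (Suc j) t" unfolding Pg by simp
  finally show ?case unfolding B_def .
qed

lemma Phi_foldr:
  "Phi (foldr (\<lambda>j P. mexp (oint (magA \<alpha> A0 j) t) ** P) xs Q) =
   foldr (\<lambda>j P. exp (oint (absA (\<lambda>t. \<alpha> *\<^sub>R Phi (A0 t)) j) t) * P) xs (Phi Q)"
proof (induction xs)
  case Nil then show ?case by simp
next
  case (Cons x xs)
  have e: "(\<lambda>s. Phi (magA \<alpha> A0 x s)) = absA (\<lambda>t. \<alpha> *\<^sub>R Phi (A0 t)) x"
    by (simp add: fun_eq_iff Phi_magA)
  show ?case using Cons by (simp add: Phi_mult Phi_mexp Phi_oint e)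
qed

lemma Phi_UF: "Phi (UF \<alpha> A0 k t) = UFa (\<lambda>t. \<alpha> *\<^sub>R Phi (A0 t)) k t"
  unfolding UF_def UFa_def Phi_foldr Phi_one ..


lemma analytic_PS:
  fixes A0 :: "real \<Rightarrow> complex^'n::finite^'n"
  assumes "real_analytic A0"
  shows "\<exists>r c. 0 < r \<and> PS r c (\<lambda>t. Phi (A0 t))"
proof -
  obtain r0 and c :: "nat \<Rightarrow> complex^'n^'n" where r0: "0 < r0"
    and S: "\<And>t. \<bar>t - 0\<bar> < r0 \<Longrightarrow> (\<lambda>n. (t - 0) ^ n *\<^sub>R c n) sums A0 t"
    using assms unfolding real_analytic_def by blast
  define r where "r = r0 / 2"
  define t1 where "t1 = 3 * r0 / 4"
  have r: "0 < r" using r0 by (simp add: r_def)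
  have t1: "0 < t1" "\<bar>t1\<bar> < r0" using r0 by (auto simp: t1_def)
  have "summable (\<lambda>n. t1 ^ n *\<^sub>R c n)" using S[of t1] t1 by (simp add: sums_summable)
  then have "(\<lambda>n. t1 ^ n *\<^sub>R c n) \<longlonglongrightarrow> 0" by (rule summable_LIMSEQ_zero)
  then have "Bseq (\<lambda>n. t1 ^ n *\<^sub>R c n)" by (rule convergent_imp_Bseq[OF convergentI])
  then obtain Kb where Kb: "0 < Kb" "\<And>n. norm (t1 ^ n *\<^sub>R c n) \<le> Kb" by (auto elim: BseqE)
  obtain KP where KP: "0 < KP" "\<And>x. norm (Phi x :: 'n bop) \<le> norm x * KP"
    using bounded_linear.pos_bounded[OF bl_Phi] by blast
  have rc: "r ^ n * norm (c n) \<le> Kb * (2/3) ^ n" for n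
  proof -
    have "r = (2/3) * t1" by (simp add: r_def t1_def)
    then have "r ^ n = (2/3) ^ n * t1 ^ n" by (simp only: power_mult_distrib)
    then have "r ^ n * norm (c n) = (2/3) ^ n * (t1 ^ n * norm (c n))" by simp
    also have "\<dots> \<le> (2/3) ^ n * Kb" using Kb(2)[of n] t1 by (intro mult_left_mono) auto
    finally show ?thesis by (simp add: mult.commute)
  qed
  have sc: "summable (\<lambda>n. r ^ n * norm (c n))"
  proof (rule summable_comparison_test'[OF summable_mult[OF summable_geometric[of "2/3"], of Kb]])
    fix n show "norm (r ^ n * norm (c n)) \<le> Kb * (2/3) ^ n" using rc[of n] r by simp
  qed simp
  have sP: "summable (\<lambda>n. r ^ n * norm (Phi (c n)))"
  proof (rule summable_comparison_test'[OF summable_mult2[OF sc, of KP]])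
    fix n
    have "r ^ n * norm (Phi (c n)) \<le> r ^ n * (norm (c n) * KP)" using KP(2)[of "c n"] r by (intro mult_left_mono) auto
    then show "norm (r ^ n * norm (Phi (c n))) \<le> r ^ n * norm (c n) * KP" using r by (simp add: mult.assoc)
  qed
  have V: "Phi (A0 t) = (\<Sum>n. t ^ n *\<^sub>R Phi (c n))" if t: "\<bar>t\<bar> < r" for t
  proof -
    have "(\<lambda>n. t ^ n *\<^sub>R c n) sums A0 t" using S[of t] t r0 by (simp add: r_def)
    from bounded_linear.sums[OF bl_Phi this] have "(\<lambda>n. t ^ n *\<^sub>R Phi (c n)) sums Phi (A0 t)"
      by (simp add: Phi_scaleR)
    then show ?thesis by (simp add: sums_iff)
  qed
  have "PS r (\<lambda>n. Phi (c n)) (\<lambda>t. Phi (A0 t))" unfolding PS_def using sP V by simp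
  then show ?thesis using r by blast
qed

theorem theorem3:
  fixes A0 :: "real \<Rightarrow> complex^'n^'n"
    and U :: "real \<Rightarrow> real \<Rightarrow> complex^'n^'n"
    and k :: nat
  assumes analytic: "real_analytic A0"
    and k: "k \<ge> 1"
    and U0: "\<And>\<alpha>. U \<alpha> 0 = mat 1"
    and Uderiv: "\<And>\<alpha> t. (U \<alpha> has_vector_derivative ((\<alpha> *\<^sub>R A0 t) ** U \<alpha> t)) (at t)"
  shows "\<exists>C \<delta>. \<delta> > 0 \<and>
           (\<forall>\<alpha> t. \<bar>\<alpha>\<bar> < \<delta> \<and> \<bar>t\<bar> < \<delta> \<longrightarrow>
              opnorm (UF \<alpha> A0 k t - U \<alpha> t) \<le> C * \<bar>\<alpha>\<bar> ^ (2 ^ k) * \<bar>t\<bar> ^ (2 ^ (k + 1) - 1))"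
proof -
  obtain r c where r: "0 < r" and PA: "PS r c (\<lambda>t. Phi (A0 t))"
    using analytic_PS[OF analytic] by blast
  have U0': "Phi (U \<alpha> 0) = 1" for \<alpha> by (simp add: U0 Phi_one)
  have Ud': "((\<lambda>t. Phi (U \<alpha> t)) has_vector_derivative (\<alpha> *\<^sub>R Phi (A0 t)) * Phi (U \<alpha> t)) (at t)" for \<alpha> t
    using bounded_linear.has_vector_derivative[OF bl_Phi Uderiv[of \<alpha> t]]
    by (simp add: Phi_mult Phi_scaleR)
  obtain C \<delta> where d: "\<delta> > 0" and H: "\<And>\<alpha> t. \<bar>\<alpha>\<bar> < \<delta> \<and> \<bar>t\<bar> < \<delta> \<Longrightarrow>
      norm (UFa (\<lambda>t. \<alpha> *\<^sub>R Phi (A0 t)) k t - Phi (U \<alpha> t)) \<le> C * \<bar>\<alpha>\<bar> ^ (2 ^ k) * \<bar>t\<bar> ^ (2 ^ (k + 1) - 1)"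
    using abstract_main[OF r PA, of "\<lambda>\<alpha> t. Phi (U \<alpha> t)", OF U0' Ud', of k] by blast
  show ?thesis
  proof (rule exI[of _ C], rule exI[of _ \<delta>], intro conjI allI impI d)
    fix \<alpha> t :: real assume at: "\<bar>\<alpha>\<bar> < \<delta> \<and> \<bar>t\<bar> < \<delta>"
    have "opnorm (UF \<alpha> A0 k t - U \<alpha> t) = norm (UFa (\<lambda>t. \<alpha> *\<^sub>R Phi (A0 t)) k t - Phi (U \<alpha> t))"
      by (simp add: norm_Phi[symmetric] Phi_diff Phi_UF)
    also have "\<dots> \<le> C * \<bar>\<alpha>\<bar> ^ (2 ^ k) * \<bar>t\<bar> ^ (2 ^ (k + 1) - 1)" by (rule H[OF at])
    finally show "opnorm (UF \<alpha> A0 k t - U \<alpha> t) \<le> C * \<bar>\<alpha>\<bar> ^ (2 ^ k) * \<bar>t\<bar> ^ (2 ^ (k + 1) - 1)" .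
  qed
qed

end
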